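(* Let $\mathbf C$ be the middle-third Cantor set, $s=\log_32$, $\mathcal R=\bigcup\{\mathbf C+k/3^n:k,n\in\mathbb Z\}$, $\mathfrak H^s$ the $s$-dimensional Hausdorff measure restricted to $\mathcal R$, and $\mathcal H=L^2(\mathcal R,\mathfrak H^s)$. Let $M$ be the cascade operator $M=U^{-1}\pi(m_0)$ on $\mathcal H$, i.e. $M\xi(x)=\xi(3x)+\xi(3x-2)$. Let $\xi\in\mathcal H$ have bounded support and suppose $\xi$ is not a constant multiple of $\chi_{\mathbf C}$. Then there is a constant $c_\xi>0$ such that $\lim_{n\to\infty}\|M^{n+1}\xi-M^n\xi\|^2=c_\xi$. In particular, $(M^n\xi)_{n\in\mathbb N}$ does not converge in $\mathcal H$.
   Context: Here $Uf(x)=\frac1{\sqrt2}f(x/3)$ and $Tf(x)=f(x-1)$ are unitary operators on $\mathcal H$, $\pi(f)=f(T)$ for $f\in L^\infty(\mathbb T)$ (so $\pi(z^n)=T^n$), and $m_0(z)=\frac1{\sqrt2}(1+z^2)$, so $\pi(m_0)=\frac1{\sqrt2}(I+T^2)$. *)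

theory Defs
  imports "HOL-Analysis.Analysis"
begin

definition cantor_set :: "real set" where
  "cantor_set = {x. \<exists>d::nat \<Rightarrow> nat. (\<forall>k. d k \<in> {0, 2}) \<and>
                     x = (\<Sum>k. real (d k) / 3 ^ Suc k)}"

definition cantor_R :: "real set" where
  "cantor_R = \<Union> {(\<lambda>x. x + real_of_int k / 3 powi n) ` cantor_set | k n :: int. True}"

text \<open>s-dimensional Hausdorff outer measure on the real line (countable covers by
  bounded sets of diameter at most delta, no normalising constant).\<close>
definition hausdorff_delta :: "real \<Rightarrow> real \<Rightarrow> real set \<Rightarrow> ennreal" where
  "hausdorff_delta s \<delta> A =
     (INF U \<in> {U :: nat \<Rightarrow> real set. A \<subseteq> (\<Union>i. U i) \<and>
                 (\<forall>i. bounded (U i) \<and> diameter (U i) \<le> \<delta>)}.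
        (\<Sum>i. ennreal (diameter (U i) powr s)))"

definition hausdorff_outer :: "real \<Rightarrow> real set \<Rightarrow> ennreal" where
  "hausdorff_outer s A = (SUP \<delta> \<in> {0<..}. hausdorff_delta s \<delta> A)"

definition cantor_measure :: "real measure" where
  "cantor_measure = measure_of UNIV (sets borel)
      (\<lambda>A. hausdorff_outer (log 3 2) (A \<inter> cantor_R))"

definition in_L2 :: "(real \<Rightarrow> complex) \<Rightarrow> bool" where
  "in_L2 f \<longleftrightarrow> f \<in> borel_measurable cantor_measure \<and>
                integrable cantor_measure (\<lambda>x. (cmod (f x))\<^sup>2)"

definition L2_norm_sq :: "(real \<Rightarrow> complex) \<Rightarrow> real" where
  "L2_norm_sq f = integral\<^sup>L cantor_measure (\<lambda>x. (cmod (f x))\<^sup>2)"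

definition cascade :: "(real \<Rightarrow> complex) \<Rightarrow> (real \<Rightarrow> complex)" where
  "cascade \<xi> = (\<lambda>x. \<xi> (3 * x) + \<xi> (3 * x - 2))"

end

theory Submission
  imports Defs
begin


lemma ennreal_mult_INF:
  fixes c :: ennreal
  assumes "0 < c" "c < top"
  shows "c * (INF i\<in>I. f i) = (INF i\<in>I. c * f i)"
proof (rule antisym)
  show "c * (INF i\<in>I. f i) \<le> (INF i\<in>I. c * f i)"
    by (rule INF_greatest) (simp add: INF_lower mult_left_mono)
  have "c * inverse c = 1" using ennreal_divide_self[of c] assms by (simp add: divide_ennreal_def)
  then have ci: "inverse c * c = 1" by (simp add: mult.commute)
  have "inverse c * (INF i\<in>I. c * f i) \<le> (INF i\<in>I. f i)"
  proof (rule INF_greatest)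
    fix i assume "i \<in> I"
    have "inverse c * (INF i\<in>I. c * f i) \<le> inverse c * (c * f i)"
      by (rule mult_left_mono) (use \<open>i \<in> I\<close> in \<open>auto intro: INF_lower\<close>)
    also have "\<dots> = f i" using ci by (simp add: mult.assoc[symmetric])
    finally show "inverse c * (INF i\<in>I. c * f i) \<le> f i" .
  qed
  then have "c * (inverse c * (INF i\<in>I. c * f i)) \<le> c * (INF i\<in>I. f i)"
    by (rule mult_left_mono) simp
  moreover have "c * (inverse c * (INF i\<in>I. c * f i)) = (INF i\<in>I. c * f i)"
    using ci by (simp add: mult.assoc[symmetric] mult.commute)
  ultimately show "(INF i\<in>I. c * f i) \<le> c * (INF i\<in>I. f i)" by simp
qed

lemma bounded_affine:
  fixes c t :: real
  assumes "bounded U"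
  shows "bounded ((\<lambda>x. c*x+t) ` U)"
proof -
  from assms obtain e where e: "\<forall>x\<in>U. norm x \<le> e" by (auto simp: bounded_iff)
  have "\<forall>y\<in>(\<lambda>x. c*x+t) ` U. norm y \<le> \<bar>c\<bar> * e + \<bar>t\<bar>"
  proof
    fix y assume "y \<in> (\<lambda>x. c*x+t) ` U"
    then obtain x where x: "x \<in> U" "y = c*x+t" by auto
    have "\<bar>c*x\<bar> \<le> \<bar>c\<bar> * e" using e x by (simp add: abs_mult mult_left_mono)
    then show "norm y \<le> \<bar>c\<bar> * e + \<bar>t\<bar>" using x by simp
  qed
  then show ?thesis by (auto simp: bounded_iff)
qed

lemma diam_affine_le:
  fixes c t :: real
  assumes "c > 0" "bounded U"
  shows "diameter ((\<lambda>x. c*x+t) ` U) \<le> c * diameter U"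
proof (cases "U = {}")
  case True then show ?thesis by simp
next
  case False
  show ?thesis
  proof (rule diameter_le)
    show "(\<lambda>x. c*x+t) ` U \<noteq> {} \<or> 0 \<le> c * diameter U" using False by simp
    fix x y assume "x \<in> (\<lambda>x. c*x+t) ` U" "y \<in> (\<lambda>x. c*x+t) ` U"
    then obtain a b where ab: "a \<in> U" "b \<in> U" "x = c*a+t" "y = c*b+t" by auto
    have "dist a b \<le> diameter U" using diameter_bounded_bound[OF assms(2) ab(1,2)] .
    then have "c * \<bar>a - b\<bar> \<le> c * diameter U" using assms(1) by (simp add: dist_real_def)
    moreover have "norm (x - y) = c * \<bar>a - b\<bar>" using ab assms(1)
      by (simp add: abs_mult right_diff_distrib[symmetric])
    ultimately show "norm (x - y) \<le> c * diameter U" by simp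
  qed
qed

lemma affine_inv_image:
  fixes c t :: real
  assumes "c > 0"
  shows "(\<lambda>x. (1/c)*x + (-t/c)) ` ((\<lambda>x. c*x+t) ` A) = A"
  using assms by (force simp: image_iff field_simps)

lemma diam_affine:
  fixes c t :: real
  assumes "c > 0" "bounded U"
  shows "diameter ((\<lambda>x. c*x+t) ` U) = c * diameter U"
proof (rule antisym)
  show "diameter ((\<lambda>x. c*x+t) ` U) \<le> c * diameter U" using diam_affine_le[OF assms] .
  have "diameter ((\<lambda>x. (1/c)*x + (-t/c)) ` ((\<lambda>x. c*x+t) ` U)) \<le> (1/c) * diameter ((\<lambda>x. c*x+t) ` U)"
    by (rule diam_affine_le) (use assms bounded_affine in auto)
  then have "diameter U \<le> (1/c) * diameter ((\<lambda>x. c*x+t) ` U)"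
    using affine_inv_image[OF assms(1)] by simp
  then show "c * diameter U \<le> diameter ((\<lambda>x. c*x+t) ` U)"
    using assms(1) by (simp add: field_simps)
qed

lemma hd_affine_le:
  fixes c t :: real
  assumes "c > 0"
  shows "hausdorff_delta s (c*\<delta>) ((\<lambda>x. c*x+t) ` A) \<le> ennreal (c powr s) * hausdorff_delta s \<delta> A"
proof -
  let ?\<phi> = "\<lambda>x. c*x+t"
  let ?Cov = "{U :: nat \<Rightarrow> real set. A \<subseteq> (\<Union>i. U i) \<and> (\<forall>i. bounded (U i) \<and> diameter (U i) \<le> \<delta>)}"
  have "hausdorff_delta s (c*\<delta>) (?\<phi>`A) \<le> ennreal (c powr s) * (\<Sum>i. ennreal (diameter (U i) powr s))"
    if U: "U \<in> ?Cov" for U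
  proof -
    let ?V = "\<lambda>i. ?\<phi> ` U i"
    have "hausdorff_delta s (c*\<delta>) (?\<phi>`A) \<le> (\<Sum>i. ennreal (diameter (?V i) powr s))"
      unfolding hausdorff_delta_def
    proof (rule INF_lower)
      have "?\<phi>`A \<subseteq> (\<Union>i. ?V i)" using U by blast
      moreover have "\<forall>i. bounded (?V i) \<and> diameter (?V i) \<le> c*\<delta>"
        using U assms by (auto simp: diam_affine bounded_affine)
      ultimately show "?V \<in> {U. ?\<phi>`A \<subseteq> (\<Union>i. U i) \<and> (\<forall>i. bounded (U i) \<and> diameter (U i) \<le> c*\<delta>)}"
        by blast
    qed
    also have "\<dots> = (\<Sum>i. ennreal (c powr s) * ennreal (diameter (U i) powr s))"
      using U assms by (simp add: diam_affine powr_mult diameter_ge_0 ennreal_mult)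
    also have "\<dots> = ennreal (c powr s) * (\<Sum>i. ennreal (diameter (U i) powr s))" by simp
    finally show ?thesis .
  qed
  then have "hausdorff_delta s (c*\<delta>) (?\<phi>`A) \<le> (INF U\<in>?Cov. ennreal (c powr s) * (\<Sum>i. ennreal (diameter (U i) powr s)))"
    by (intro INF_greatest) auto
  also have "\<dots> = ennreal (c powr s) * hausdorff_delta s \<delta> A"
    unfolding hausdorff_delta_def using assms by (subst ennreal_mult_INF) auto
  finally show ?thesis .
qed

lemma H_affine_le:
  fixes c t :: real
  assumes "c > 0"
  shows "hausdorff_outer s ((\<lambda>x. c*x+t) ` A) \<le> ennreal (c powr s) * hausdorff_outer s A"
  unfolding hausdorff_outer_def
proof (rule SUP_least)
  fix \<delta> :: real assume "\<delta> \<in> {0<..}"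
  then have d: "\<delta>/c \<in> {0<..}" using assms by simp
  have "hausdorff_delta s \<delta> ((\<lambda>x. c*x+t) ` A) = hausdorff_delta s (c*(\<delta>/c)) ((\<lambda>x. c*x+t) ` A)"
    using assms by simp
  also have "\<dots> \<le> ennreal (c powr s) * hausdorff_delta s (\<delta>/c) A" by (rule hd_affine_le[OF assms])
  also have "\<dots> \<le> ennreal (c powr s) * (SUP \<delta>\<in>{0<..}. hausdorff_delta s \<delta> A)"
    by (intro mult_left_mono SUP_upper d) simp
  finally show "hausdorff_delta s \<delta> ((\<lambda>x. c*x+t) ` A) \<le> ennreal (c powr s) * (SUP \<delta>\<in>{0<..}. hausdorff_delta s \<delta> A)" .
qed

lemma H_affine:
  fixes c t :: real
  assumes "c > 0"
  shows "hausdorff_outer s ((\<lambda>x. c*x+t) ` A) = ennreal (c powr s) * hausdorff_outer s A"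
proof (rule antisym)
  show "hausdorff_outer s ((\<lambda>x. c*x+t) ` A) \<le> ennreal (c powr s) * hausdorff_outer s A"
    by (rule H_affine_le[OF assms])
  have "hausdorff_outer s ((\<lambda>x. (1/c)*x + (-t/c)) ` ((\<lambda>x. c*x+t) ` A))
      \<le> ennreal ((1/c) powr s) * hausdorff_outer s ((\<lambda>x. c*x+t) ` A)"
    by (rule H_affine_le) (use assms in simp)
  then have "hausdorff_outer s A \<le> ennreal ((1/c) powr s) * hausdorff_outer s ((\<lambda>x. c*x+t) ` A)"
    using affine_inv_image[OF assms] by simp
  then have "ennreal (c powr s) * hausdorff_outer s A \<le>
      ennreal (c powr s) * (ennreal ((1/c) powr s) * hausdorff_outer s ((\<lambda>x. c*x+t) ` A))"
    by (rule mult_left_mono) simp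
  also have "\<dots> = ennreal (c powr s * (1/c) powr s) * hausdorff_outer s ((\<lambda>x. c*x+t) ` A)"
    by (simp add: ennreal_mult mult.assoc)
  also have "c powr s * (1/c) powr s = 1" using assms by (simp add: powr_mult[symmetric])
  finally show "ennreal (c powr s) * hausdorff_outer s A \<le> hausdorff_outer s ((\<lambda>x. c*x+t) ` A)" by simp
qed



definition cs :: "(nat \<Rightarrow> nat) \<Rightarrow> real" where
  "cs d = (\<Sum>k. real (d k) / 3 ^ Suc k)"

definition digits02 :: "(nat \<Rightarrow> nat) \<Rightarrow> bool" where
  "digits02 d \<longleftrightarrow> (\<forall>k. d k \<in> {0, 2})"

lemma cantor_set_iff: "x \<in> cantor_set \<longleftrightarrow> (\<exists>d. digits02 d \<and> x = cs d)"
  unfolding cantor_set_def cs_def digits02_def by auto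

lemma geom_sum: "(\<lambda>k. (2/3) * (1/3::real)^k) sums 1"
proof -
  have "(\<lambda>k. (1/3::real)^k) sums (1 / (1 - 1/3))" by (rule geometric_sums) simp
  then have "(\<lambda>k. (2/3) * (1/3::real)^k) sums ((2/3) * (1 / (1 - 1/3)))" by (rule sums_mult)
  then show ?thesis by simp
qed

lemma cs_term_le: "digits02 d \<Longrightarrow> real (d k) / 3 ^ Suc k \<le> (2/3) * (1/3::real)^k"
proof -
  assume "digits02 d"
  then have "d k \<in> {0,2}" unfolding digits02_def by blast
  then have "real (d k) \<le> 2" by auto
  then have "real (d k) / 3 ^ Suc k \<le> 2 / 3 ^ Suc k" by (simp add: divide_right_mono)
  also have "(2::real) / 3 ^ Suc k = (2/3) * (1/3::real)^k" by (simp add: power_one_over)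
  finally show ?thesis .
qed

lemma cs_summable: "digits02 d \<Longrightarrow> summable (\<lambda>k. real (d k) / 3 ^ Suc k)"
  by (rule summable_comparison_test[of _ "\<lambda>k. (2/3) * (1/3::real)^k"])
     (use cs_term_le geom_sum sums_summable in auto)

lemma cs_bounds: "digits02 d \<Longrightarrow> 0 \<le> cs d \<and> cs d \<le> 1"
proof
  assume d: "digits02 d"
  show "0 \<le> cs d" unfolding cs_def by (rule suminf_nonneg) (use cs_summable[OF d] in auto)
  have "cs d \<le> (\<Sum>k. (2/3) * (1/3::real)^k)"
    unfolding cs_def by (rule suminf_le) (use cs_term_le[OF d] cs_summable[OF d] geom_sum sums_summable in auto)
  then show "cs d \<le> 1" using sums_unique[OF geom_sum] by simp
qed

lemma digits02_case: "a \<in> {0,2} \<Longrightarrow> digits02 d \<Longrightarrow> digits02 (case_nat a d)"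
  unfolding digits02_def by (auto split: nat.split)

lemma cs_cons:
  assumes "a \<in> {0,2}" "digits02 d"
  shows "cs (case_nat a d) = real a / 3 + cs d / 3"
proof -
  let ?f = "\<lambda>k. real (case_nat a d k) / 3 ^ Suc k"
  have s: "summable ?f" using cs_summable[OF digits02_case[OF assms]] .
  have "(\<Sum>n. ?f (Suc n)) = suminf ?f - ?f 0" by (rule suminf_split_head[OF s])
  moreover have "(\<lambda>n. ?f (Suc n)) = (\<lambda>n. (1/3) * (real (d n) / 3 ^ Suc n))" by auto
  moreover have "(\<Sum>n. (1/3) * (real (d n) / 3 ^ Suc n)) = (1/3) * cs d"
    unfolding cs_def by (rule suminf_mult[OF cs_summable[OF assms(2)]])
  ultimately have "(1/3) * cs d = suminf ?f - real a / 3" by simp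
  moreover have "suminf ?f = cs (case_nat a d)" unfolding cs_def ..
  ultimately show ?thesis by linarith
qed

lemma cantor_01: "x \<in> cantor_set \<Longrightarrow> 0 \<le> x \<and> x \<le> 1"
proof -
  assume "x \<in> cantor_set"
  then obtain d where d: "digits02 d" "x = cs d" unfolding cantor_set_iff by (elim exE conjE)
  show ?thesis using cs_bounds[OF d(1)] d(2) by simp
qed

lemma cantor_div3:
  assumes "x \<in> cantor_set"
  shows "x/3 \<in> cantor_set" "(x+2)/3 \<in> cantor_set"
proof -
  obtain d where d: "digits02 d" "x = cs d" using assms unfolding cantor_set_iff by (elim exE conjE)
  have "cs (case_nat 0 d) = x/3" using cs_cons[of 0 d] d by simp
  then show "x/3 \<in> cantor_set" unfolding cantor_set_iff
    by (intro exI[of _ "case_nat 0 d"] conjI digits02_case d(1)) auto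
  have "cs (case_nat 2 d) = (x+2)/3" using cs_cons[of 2 d] d by simp
  then show "(x+2)/3 \<in> cantor_set" unfolding cantor_set_iff
    by (intro exI[of _ "case_nat 2 d"] conjI digits02_case d(1)) auto
qed

lemma cantor_mul3:
  assumes "x \<in> cantor_set"
  shows "\<exists>a\<in>{0,2::nat}. 3*x - real a \<in> cantor_set"
proof -
  obtain d where d: "digits02 d" "x = cs d" using assms unfolding cantor_set_iff by (elim exE conjE)
  have e: "case_nat (d 0) (\<lambda>n. d (Suc n)) = d" by (rule ext) (simp split: nat.split)
  have d0: "d 0 \<in> {0,2}" "digits02 (\<lambda>n. d (Suc n))" using d(1) unfolding digits02_def by auto
  have "x = real (d 0) / 3 + cs (\<lambda>n. d (Suc n)) / 3"
    using cs_cons[OF d0] e d(2) by simp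
  then have "3*x - real (d 0) = cs (\<lambda>n. d (Suc n))" by simp
  then have "3*x - real (d 0) \<in> cantor_set" unfolding cantor_set_iff
    by (intro exI[of _ "\<lambda>n. d (Suc n)"] conjI d0(2))
  then show ?thesis using d0(1) by (intro bexI[of _ "d 0"])
qed

primrec Sset :: "nat \<Rightarrow> real set" where
  "Sset 0 = {-1/4..5/4}"
| "Sset (Suc n) = {x. 3*x \<in> Sset n \<or> 3*x - 2 \<in> Sset n}"

lemma Sset_bound: "x \<in> Sset n \<Longrightarrow> -1/4 \<le> x \<and> x \<le> 5/4"
proof (induction n arbitrary: x)
  case 0 then show ?case by simp
next
  case (Suc n)
  from Suc.prems have "3*x \<in> Sset n \<or> 3*x - 2 \<in> Sset n" by simp
  then show ?case using Suc.IH[of "3*x"] Suc.IH[of "3*x-2"] by auto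
qed

definition gmap :: "real \<Rightarrow> real" where
  "gmap x = (if x < 1/2 then 3*x else 3*x - 2)"

definition dg :: "real \<Rightarrow> nat" where
  "dg x = (if x < 1/2 then 0 else 2)"

lemma gmap_dg: "y = (real (dg y) + gmap y) / 3"
  unfolding gmap_def dg_def by auto

lemma Sset_g: "x \<in> Sset (Suc n) \<Longrightarrow> gmap x \<in> Sset n"
proof -
  assume "x \<in> Sset (Suc n)"
  then have "3*x \<in> Sset n \<or> 3*x - 2 \<in> Sset n" by simp
  then show ?thesis
  proof
    assume h: "3*x \<in> Sset n"
    then have "x < 1/2" using Sset_bound[OF h] by simp
    then show ?thesis using h by (simp add: gmap_def)
  next
    assume h: "3*x - 2 \<in> Sset n"
    then have "\<not> x < 1/2" using Sset_bound[OF h] by simp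
    then show ?thesis using h by (simp add: gmap_def)
  qed
qed

lemma cantor_Sset: "x \<in> cantor_set \<Longrightarrow> x \<in> Sset n"
proof (induction n arbitrary: x)
  case 0
  have "0 \<le> x \<and> x \<le> 1" using cantor_01 0 by blast
  then show ?case by simp
next
  case (Suc n)
  obtain a where a: "a \<in> {0,2::nat}" "3*x - real a \<in> cantor_set" using cantor_mul3[OF Suc.prems] by blast
  then show ?case using Suc.IH[OF a(2)] by auto
qed

lemma Sset_cantor:
  assumes x: "\<forall>n. x \<in> Sset n"
  shows "x \<in> cantor_set"
proof -
  define y where "y k = (gmap ^^ k) x" for k
  have yS: "\<forall>n. y k \<in> Sset n" for k
  proof (induction k)
    case 0 then show ?case using x by (simp add: y_def)
  next
    case (Suc k)
    show ?case
    proof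
      fix n
      have "gmap (y k) \<in> Sset n" using Sset_g Suc by blast
      then show "y (Suc k) \<in> Sset n" by (simp add: y_def)
    qed
  qed
  have yb: "\<bar>y k\<bar> \<le> 5/4" for k
  proof -
    have "y k \<in> Sset 0" using yS by blast
    then show ?thesis using Sset_bound[of "y k" 0] by auto
  qed
  define d where "d k = dg (y k)" for k
  have d02: "digits02 d" unfolding digits02_def d_def dg_def by auto
  have part: "x = (\<Sum>i<n. real (d i) / 3 ^ Suc i) + y n / 3^n" for n
  proof (induction n)
    case 0 then show ?case by (simp add: y_def)
  next
    case (Suc n)
    have "y (Suc n) = gmap (y n)" by (simp add: y_def)
    then have "y n / 3^n = real (d n) / 3 ^ Suc n + y (Suc n) / 3 ^ Suc n"
      using gmap_dg[of "y n"] by (simp add: d_def field_simps)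
    then show ?case using Suc by simp
  qed
  have "(\<lambda>n. y n / 3^n) \<longlonglongrightarrow> 0"
  proof (rule Lim_null_comparison)
    have "norm (y n / 3^n) \<le> (5/4) * (1/3::real)^n" for n
    proof -
      have "norm (y n / 3^n) = \<bar>y n\<bar> / 3^n" by simp
      also have "\<dots> \<le> (5/4) / 3^n" by (rule divide_right_mono) (use yb in auto)
      also have "\<dots> = (5/4) * (1/3::real)^n" by (simp add: power_one_over)
      finally show ?thesis .
    qed
    then show "\<forall>\<^sub>F n in sequentially. norm (y n / 3^n) \<le> (5/4) * (1/3::real)^n"
      by (intro always_eventually) auto
    show "(\<lambda>n. (5/4) * (1/3::real)^n) \<longlonglongrightarrow> 0"
      by (intro tendsto_mult_right_zero LIMSEQ_power_zero) simp
  qed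
  then have "(\<lambda>n. x - y n / 3^n) \<longlonglongrightarrow> x - 0" by (intro tendsto_intros)
  then have "(\<lambda>n. (\<Sum>i<n. real (d i) / 3 ^ Suc i)) \<longlonglongrightarrow> x"
  proof -
    have "(\<lambda>n. (\<Sum>i<n. real (d i) / 3 ^ Suc i)) = (\<lambda>n. x - y n / 3^n)"
    proof
      fix n show "(\<Sum>i<n. real (d i) / 3 ^ Suc i) = x - y n / 3^n" using part[of n] by linarith
    qed
    then show ?thesis using \<open>(\<lambda>n. x - y n / 3^n) \<longlonglongrightarrow> x - 0\<close> by simp
  qed
  then have "(\<lambda>i. real (d i) / 3 ^ Suc i) sums x" by (simp add: sums_def)
  then have "x = cs d" unfolding cs_def by (simp add: sums_unique)
  then show ?thesis unfolding cantor_set_iff by (intro exI[of _ d] conjI d02)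
qed

lemma cantor_eq_Sset: "cantor_set = (\<Inter>n. Sset n)"
  using cantor_Sset Sset_cantor by blast

lemma Sset_borel: "Sset n \<in> sets borel"
proof (induction n)
  case 0 then show ?case by simp
next
  case (Suc n)
  have m1: "(\<lambda>x::real. 3*x) \<in> borel_measurable borel" by simp
  have m2: "(\<lambda>x::real. 3*x - 2) \<in> borel_measurable borel" by simp
  have "(\<lambda>x::real. 3*x) -` Sset n \<in> sets borel" using measurable_sets[OF m1 Suc] by simp
  moreover have "(\<lambda>x::real. 3*x - 2) -` Sset n \<in> sets borel" using measurable_sets[OF m2 Suc] by simp
  moreover have "Sset (Suc n) = (\<lambda>x::real. 3*x) -` Sset n \<union> (\<lambda>x::real. 3*x - 2) -` Sset n" by auto
  ultimately show ?case by simp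
qed

lemma cantor_borel: "cantor_set \<in> sets borel"
  unfolding cantor_eq_Sset using Sset_borel by (intro sets.countable_INT) auto

definition triadic :: "real \<Rightarrow> bool" where
  "triadic q \<longleftrightarrow> (\<exists>k::int. \<exists>m::nat. q = of_int k / 3^m)"

lemma triadic_powi: "(\<exists>k n::int. q = of_int k / 3 powi n) \<longleftrightarrow> triadic q"
proof
  assume "\<exists>k n::int. q = of_int k / 3 powi n"
  then obtain k n where q: "q = of_int k / 3 powi n" by blast
  show "triadic q"
  proof (cases "n \<ge> 0")
    case True
    then have "(3::real) powi n = 3 ^ nat n" by (simp add: power_int_def)
    then show ?thesis using q unfolding triadic_def by auto
  next
    case False
    then have "(3::real) powi n = inverse (3 ^ nat (-n))" by (simp add: power_int_def power_one_over[symmetric] inverse_eq_divide)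
    then have "q = of_int k * 3 ^ nat (-n)" using q by (simp add: divide_inverse)
    then have "q = of_int (k * 3 ^ nat (-n)) / 3^0" by simp
    then show ?thesis unfolding triadic_def by blast
  qed
next
  assume "triadic q"
  then obtain k m where q: "q = of_int k / 3^m" unfolding triadic_def by blast
  have "(3::real) powi (int m) = 3^m" by (simp add: power_int_def)
  then show "\<exists>k n::int. q = of_int k / 3 powi n" using q by metis
qed

lemma R_iff: "y \<in> cantor_R \<longleftrightarrow> (\<exists>x\<in>cantor_set. \<exists>q. triadic q \<and> y = x + q)"
proof -
  have "y \<in> cantor_R \<longleftrightarrow> (\<exists>k n::int. \<exists>x\<in>cantor_set. y = x + of_int k / 3 powi n)"
    unfolding cantor_R_def by auto
  also have "\<dots> \<longleftrightarrow> (\<exists>x\<in>cantor_set. \<exists>q. (\<exists>k n::int. q = of_int k / 3 powi n) \<and> y = x + q)"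
    by blast
  finally show ?thesis unfolding triadic_powi .
qed

lemma triadic_div3: "triadic q \<Longrightarrow> triadic (q/3)"
  unfolding triadic_def by (metis divide_divide_eq_left power_Suc2 mult.commute)

lemma triadic_mul3: "triadic q \<Longrightarrow> triadic (3*q)"
  unfolding triadic_def by (metis of_int_mult of_int_numeral times_divide_eq_right)

lemma triadic_add_int: "triadic q \<Longrightarrow> triadic (q + of_int j)"
proof -
  assume "triadic q"
  then obtain k m where q: "q = of_int k / 3^m" unfolding triadic_def by blast
  then have "q + of_int j = of_int (k + j * 3^m) / 3^m" by (simp add: field_simps)
  then show ?thesis unfolding triadic_def by blast
qed

lemma R_div3: "y/3 \<in> cantor_R \<longleftrightarrow> y \<in> cantor_R"
proof
  assume "y \<in> cantor_R"
  then obtain x q where "x \<in> cantor_set" "triadic q" "y = x + q" using R_iff by blast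
  then show "y/3 \<in> cantor_R" unfolding R_iff
    by (intro bexI[of _ "x/3"] exI[of _ "q/3"]) (auto simp: cantor_div3 triadic_div3)
next
  assume "y/3 \<in> cantor_R"
  then obtain x q where xq: "x \<in> cantor_set" "triadic q" "y/3 = x + q" using R_iff by blast
  obtain a where a: "a \<in> {0,2::nat}" "3*x - real a \<in> cantor_set" using cantor_mul3[OF xq(1)] by blast
  have "triadic (3*q + of_int (int a))" by (intro triadic_add_int triadic_mul3 xq(2))
  moreover have "y = (3*x - real a) + (3*q + of_int (int a))" using xq(3) by simp
  ultimately have "\<exists>x'\<in>cantor_set. \<exists>q. triadic q \<and> y = x' + q"
    using a(2) by (intro bexI[of _ "3*x - real a"] exI[of _ "3*q + of_int (int a)"]) auto
  then show "y \<in> cantor_R" unfolding R_iff .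
qed

lemma R_add_int: "y \<in> cantor_R \<Longrightarrow> y + of_int j \<in> cantor_R"
proof -
  assume "y \<in> cantor_R"
  then obtain x q where "x \<in> cantor_set" "triadic q" "y = x + q" using R_iff by blast
  then show ?thesis unfolding R_iff
    by (intro bexI[of _ x] exI[of _ "q + of_int j"]) (auto simp: triadic_add_int)
qed

lemma R_add2: "y + 2 \<in> cantor_R \<longleftrightarrow> y \<in> cantor_R"
proof
  assume "y + 2 \<in> cantor_R"
  from R_add_int[OF this, of "-2"] show "y \<in> cantor_R" by simp
next
  assume "y \<in> cantor_R"
  from R_add_int[OF this, of 2] show "y + 2 \<in> cantor_R" by simp
qed

lemma cantor_sub_R: "cantor_set \<subseteq> cantor_R"
proof
  fix x assume x: "x \<in> cantor_set"
  have "triadic 0" unfolding triadic_def by (rule exI[of _ 0], rule exI[of _ 0]) simp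
  then have "\<exists>x'\<in>cantor_set. \<exists>q. triadic q \<and> x = x' + q" using x by (intro bexI[of _ x] exI[of _ 0]) auto
  then show "x \<in> cantor_R" unfolding R_iff .
qed



abbreviation "\<mu> \<equiv> cantor_measure"
abbreviation "Hs \<equiv> hausdorff_outer (log 3 2)"

lemma sets_cm[measurable_cong]: "sets cantor_measure = sets borel"
  unfolding cantor_measure_def using sets.sigma_sets_eq[of borel] by (simp add: sets_measure_of_conv)

lemma space_cm[simp]: "space cantor_measure = UNIV"
  unfolding cantor_measure_def by (simp add: space_measure_of_conv)

definition MS :: bool where
  "MS = measure_space UNIV (sets borel) (\<lambda>A. Hs (A \<inter> cantor_R))"

lemma emeasure_cm: "A \<in> sets borel \<Longrightarrow> emeasure \<mu> A = (if MS then Hs (A \<inter> cantor_R) else 0)"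
proof -
  have e: "sigma_sets UNIV (sets borel) = (sets borel :: real set set)"
    using sets.sigma_sets_eq[of borel] by simp
  assume "A \<in> sets borel"
  then show ?thesis unfolding cantor_measure_def MS_def emeasure_measure_of_conv e by simp
qed

lemma pow3s: "(3::real) powr log 3 2 = 2" by simp
lemma pow13s: "(1/3::real) powr log 3 2 = 1/2" by (simp add: powr_divide)

lemma vimage3: "(\<lambda>x::real. 3*x) -` A \<in> sets borel" if "A \<in> sets borel"
proof -
  have m: "(\<lambda>x::real. 3*x) \<in> borel_measurable borel" by simp
  show ?thesis using measurable_sets[OF m that] by simp
qed

lemma vimage_d3: "(\<lambda>x::real. x/3) -` A \<in> sets borel" if "A \<in> sets borel"
proof -
  have m: "(\<lambda>x::real. x/3) \<in> borel_measurable borel" by simp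
  show ?thesis using measurable_sets[OF m that] by simp
qed

lemma vimage_m2: "(\<lambda>x::real. x - 2) -` A \<in> sets borel" if "A \<in> sets borel"
proof -
  have m: "(\<lambda>x::real. x - 2) \<in> borel_measurable borel" by simp
  show ?thesis using measurable_sets[OF m that] by simp
qed

lemma emeasure_scale:
  assumes A: "A \<in> sets borel"
  shows "emeasure \<mu> ((\<lambda>x. 3*x) -` A) = ennreal (1/2) * emeasure \<mu> A"
proof -
  have eq: "((\<lambda>x. 3*x) -` A) \<inter> cantor_R = (\<lambda>x. (1/3)*x + 0) ` (A \<inter> cantor_R)"
  proof (intro equalityI subsetI)
    fix x assume x: "x \<in> ((\<lambda>x. 3*x) -` A) \<inter> cantor_R"
    then have "3*x \<in> A \<inter> cantor_R" using R_div3[of "3*x"] by simp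
    moreover have "x = (1/3)*(3*x) + 0" by simp
    ultimately show "x \<in> (\<lambda>x. (1/3)*x + 0) ` (A \<inter> cantor_R)" by (rule rev_image_eqI)
  next
    fix x assume "x \<in> (\<lambda>x. (1/3)*x + 0) ` (A \<inter> cantor_R)"
    then obtain y where y: "y \<in> A" "y \<in> cantor_R" "x = y/3" by auto
    have e3: "3*x = y" using y(3) by simp
    have "3*x \<in> A" by (subst e3) (rule y(1))
    moreover have "x \<in> cantor_R" unfolding y(3) using y(2) R_div3[of y] by simp
    ultimately show "x \<in> ((\<lambda>x. 3*x) -` A) \<inter> cantor_R" by simp
  qed
  have "Hs (((\<lambda>x. 3*x) -` A) \<inter> cantor_R) = ennreal (1/2) * Hs (A \<inter> cantor_R)"
    unfolding eq by (subst H_affine) (simp_all add: pow13s)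
  then show ?thesis using emeasure_cm[OF A] emeasure_cm[OF vimage3[OF A]] by simp
qed

lemma emeasure_unscale:
  assumes A: "A \<in> sets borel"
  shows "emeasure \<mu> ((\<lambda>x. x/3) -` A) = ennreal 2 * emeasure \<mu> A"
proof -
  have eq: "((\<lambda>x. x/3) -` A) \<inter> cantor_R = (\<lambda>x. 3*x + 0) ` (A \<inter> cantor_R)"
  proof (intro equalityI subsetI)
    fix x assume x: "x \<in> ((\<lambda>x. x/3) -` A) \<inter> cantor_R"
    then have "x/3 \<in> A \<inter> cantor_R" using R_div3[of x] by simp
    moreover have "x = 3*(x/3) + 0" by simp
    ultimately show "x \<in> (\<lambda>x. 3*x + 0) ` (A \<inter> cantor_R)" by (rule rev_image_eqI)
  next
    fix x assume "x \<in> (\<lambda>x. 3*x + 0) ` (A \<inter> cantor_R)"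
    then obtain y where y: "y \<in> A" "y \<in> cantor_R" "x = 3*y" by auto
    then show "x \<in> ((\<lambda>x. x/3) -` A) \<inter> cantor_R" using R_div3[of "3*y"] by simp
  qed
  have "Hs (((\<lambda>x. x/3) -` A) \<inter> cantor_R) = ennreal 2 * Hs (A \<inter> cantor_R)"
    unfolding eq by (subst H_affine) (simp_all add: pow3s)
  then show ?thesis using emeasure_cm[OF A] emeasure_cm[OF vimage_d3[OF A]] by simp
qed

lemma emeasure_shift:
  assumes A: "A \<in> sets borel"
  shows "emeasure \<mu> ((\<lambda>x. x - 2) -` A) = emeasure \<mu> A"
proof -
  have eq: "((\<lambda>x. x - 2) -` A) \<inter> cantor_R = (\<lambda>x. 1*x + 2) ` (A \<inter> cantor_R)"
  proof (intro equalityI subsetI)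
    fix x assume x: "x \<in> ((\<lambda>x. x - 2) -` A) \<inter> cantor_R"
    then have "x - 2 \<in> A \<inter> cantor_R" using R_add2[of "x-2"] by simp
    moreover have "x = 1*(x - 2) + 2" by simp
    ultimately show "x \<in> (\<lambda>x. 1*x + 2) ` (A \<inter> cantor_R)" by (rule rev_image_eqI)
  next
    fix x assume "x \<in> (\<lambda>x. 1*x + 2) ` (A \<inter> cantor_R)"
    then obtain y where y: "y \<in> A" "y \<in> cantor_R" "x = y + 2" by auto
    then show "x \<in> ((\<lambda>x. x - 2) -` A) \<inter> cantor_R" using R_add2[of y] by simp
  qed
  have "Hs (((\<lambda>x. x - 2) -` A) \<inter> cantor_R) = Hs (A \<inter> cantor_R)"
    unfolding eq by (subst H_affine) simp_all
  then show ?thesis using emeasure_cm[OF A] emeasure_cm[OF vimage_m2[OF A]] by simp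
qed

lemma distr_scale: "distr \<mu> borel (\<lambda>x. 3*x) = density \<mu> (\<lambda>_. ennreal (1/2))"
proof (rule measure_eqI)
  show "sets (distr \<mu> borel (\<lambda>x. 3*x)) = sets (density \<mu> (\<lambda>_. ennreal (1/2)))" by (simp add: sets_cm)
  fix A assume "A \<in> sets (distr \<mu> borel (\<lambda>x. 3*x))"
  then have A: "A \<in> sets borel" by simp
  have m: "(\<lambda>x::real. 3*x) \<in> measurable \<mu> borel" by measurable
  have "emeasure (distr \<mu> borel (\<lambda>x. 3*x)) A = emeasure \<mu> ((\<lambda>x. 3*x) -` A)"
    using emeasure_distr[OF m A] by simp
  also have "\<dots> = ennreal (1/2) * emeasure \<mu> A" by (rule emeasure_scale[OF A])
  also have "\<dots> = emeasure (density \<mu> (\<lambda>_. ennreal (1/2))) A"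
    using A by (simp add: emeasure_density nn_integral_cmult_indicator)
  finally show "emeasure (distr \<mu> borel (\<lambda>x. 3*x)) A = emeasure (density \<mu> (\<lambda>_. ennreal (1/2))) A" .
qed

lemma distr_unscale: "distr \<mu> borel (\<lambda>x. x/3) = density \<mu> (\<lambda>_. ennreal 2)"
proof (rule measure_eqI)
  show "sets (distr \<mu> borel (\<lambda>x. x/3)) = sets (density \<mu> (\<lambda>_. ennreal 2))" by (simp add: sets_cm)
  fix A assume "A \<in> sets (distr \<mu> borel (\<lambda>x. x/3))"
  then have A: "A \<in> sets borel" by simp
  have m: "(\<lambda>x::real. x/3) \<in> measurable \<mu> borel" by measurable
  have "emeasure (distr \<mu> borel (\<lambda>x. x/3)) A = emeasure \<mu> ((\<lambda>x. x/3) -` A)"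
    using emeasure_distr[OF m A] by simp
  also have "\<dots> = ennreal 2 * emeasure \<mu> A" by (rule emeasure_unscale[OF A])
  also have "\<dots> = emeasure (density \<mu> (\<lambda>_. ennreal 2)) A"
    using A by (simp add: emeasure_density nn_integral_cmult_indicator)
  finally show "emeasure (distr \<mu> borel (\<lambda>x. x/3)) A = emeasure (density \<mu> (\<lambda>_. ennreal 2)) A" .
qed

lemma distr_shift: "distr \<mu> borel (\<lambda>x. x - 2) = \<mu>"
proof (rule measure_eqI)
  show "sets (distr \<mu> borel (\<lambda>x. x - 2)) = sets \<mu>" by (simp add: sets_cm)
  fix A assume "A \<in> sets (distr \<mu> borel (\<lambda>x. x - 2))"
  then have A: "A \<in> sets borel" by simp
  have m: "(\<lambda>x::real. x - 2) \<in> measurable \<mu> borel" by measurable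
  have "emeasure (distr \<mu> borel (\<lambda>x. x - 2)) A = emeasure \<mu> ((\<lambda>x. x - 2) -` A)"
    using emeasure_distr[OF m A] by simp
  also have "\<dots> = emeasure \<mu> A" by (rule emeasure_shift[OF A])
  finally show "emeasure (distr \<mu> borel (\<lambda>x. x - 2)) A = emeasure \<mu> A" .
qed

lemma integral_scale:
  fixes f :: "real \<Rightarrow> 'b::{banach, second_countable_topology}"
  assumes f: "f \<in> borel_measurable borel"
  shows "(\<integral>x. f (3*x) \<partial>\<mu>) = (1/2) *\<^sub>R (\<integral>x. f x \<partial>\<mu>)"
    and "integrable \<mu> (\<lambda>x. f (3*x)) \<longleftrightarrow> integrable \<mu> f"
proof -
  have m: "(\<lambda>x::real. 3*x) \<in> measurable \<mu> borel" by measurable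
  have fm: "f \<in> borel_measurable \<mu>" using f by measurable
  have "(\<integral>x. f (3*x) \<partial>\<mu>) = integral\<^sup>L (distr \<mu> borel (\<lambda>x. 3*x)) f"
    by (rule integral_distr[OF m f, symmetric])
  also have "\<dots> = integral\<^sup>L (density \<mu> (\<lambda>_. ennreal (1/2))) f" by (simp add: distr_scale)
  also have "\<dots> = (\<integral>x. (1/2) *\<^sub>R f x \<partial>\<mu>)"
    by (rule integral_density[of f \<mu> "\<lambda>_. 1/2", OF fm]) auto
  also have "\<dots> = (1/2) *\<^sub>R (\<integral>x. f x \<partial>\<mu>)" by simp
  finally show "(\<integral>x. f (3*x) \<partial>\<mu>) = (1/2) *\<^sub>R (\<integral>x. f x \<partial>\<mu>)" .
  have "integrable \<mu> (\<lambda>x. f (3*x)) \<longleftrightarrow> integrable (distr \<mu> borel (\<lambda>x. 3*x)) f"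
    by (rule integrable_distr_eq[OF m f, symmetric])
  also have "\<dots> \<longleftrightarrow> integrable (density \<mu> (\<lambda>_. ennreal (1/2))) f" by (simp add: distr_scale)
  also have "\<dots> \<longleftrightarrow> integrable \<mu> (\<lambda>x. (1/2::real) *\<^sub>R f x)"
    by (rule integrable_density[of f \<mu> "\<lambda>_. 1/2", OF fm]) auto
  also have "\<dots> \<longleftrightarrow> integrable \<mu> f"
  proof
    assume "integrable \<mu> (\<lambda>x. (1/2::real) *\<^sub>R f x)"
    then have "integrable \<mu> (\<lambda>x. 2 *\<^sub>R ((1/2::real) *\<^sub>R f x))"
      by (rule integrable_scaleR_right[of 2])
    moreover have "(\<lambda>x. 2 *\<^sub>R ((1/2::real) *\<^sub>R f x)) = f" by (rule ext) simp
    ultimately show "integrable \<mu> f" by simp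
  qed auto
  finally show "integrable \<mu> (\<lambda>x. f (3*x)) \<longleftrightarrow> integrable \<mu> f" .
qed

lemma integral_shift:
  fixes f :: "real \<Rightarrow> 'b::{banach, second_countable_topology}"
  assumes f: "f \<in> borel_measurable borel"
  shows "(\<integral>x. f (x - 2) \<partial>\<mu>) = (\<integral>x. f x \<partial>\<mu>)"
    and "integrable \<mu> (\<lambda>x. f (x - 2)) \<longleftrightarrow> integrable \<mu> f"
proof -
  have m: "(\<lambda>x::real. x - 2) \<in> measurable \<mu> borel" by measurable
  have "(\<integral>x. f (x - 2) \<partial>\<mu>) = integral\<^sup>L (distr \<mu> borel (\<lambda>x. x - 2)) f"
    by (rule integral_distr[OF m f, symmetric])
  then show "(\<integral>x. f (x - 2) \<partial>\<mu>) = (\<integral>x. f x \<partial>\<mu>)" by (simp add: distr_shift)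
  have "integrable \<mu> (\<lambda>x. f (x - 2)) \<longleftrightarrow> integrable (distr \<mu> borel (\<lambda>x. x - 2)) f"
    by (rule integrable_distr_eq[OF m f, symmetric])
  then show "integrable \<mu> (\<lambda>x. f (x - 2)) \<longleftrightarrow> integrable \<mu> f" by (simp add: distr_shift)
qed

lemma AE_scale:
  assumes "AE y in \<mu>. P y"
  shows "AE x in \<mu>. P (3*x)"
proof -
  from assms obtain N where N: "{y \<in> space \<mu>. \<not> P y} \<subseteq> N" "emeasure \<mu> N = 0" "N \<in> sets \<mu>"
    by (elim AE_E)
  have Nb: "N \<in> sets borel" using N(3) sets_cm by simp
  have "(\<lambda>x. 3*x) -` N \<in> null_sets \<mu>"
    using emeasure_scale[OF Nb] N(2) vimage3[OF Nb] by (simp add: null_sets_def)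
  moreover have "{x \<in> space \<mu>. \<not> P (3*x)} \<subseteq> (\<lambda>x. 3*x) -` N" using N(1) by auto
  ultimately show ?thesis by (rule AE_I')
qed

lemma AE_unscale:
  assumes "AE y in \<mu>. P y"
  shows "AE x in \<mu>. P (x/3)"
proof -
  from assms obtain N where N: "{y \<in> space \<mu>. \<not> P y} \<subseteq> N" "emeasure \<mu> N = 0" "N \<in> sets \<mu>"
    by (elim AE_E)
  have Nb: "N \<in> sets borel" using N(3) sets_cm by simp
  have "(\<lambda>x. x/3) -` N \<in> null_sets \<mu>"
    using emeasure_unscale[OF Nb] N(2) vimage_d3[OF Nb] by (simp add: null_sets_def)
  moreover have "{x \<in> space \<mu>. \<not> P (x/3)} \<subseteq> (\<lambda>x. x/3) -` N" using N(1) by auto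
  ultimately show ?thesis by (rule AE_I')
qed

lemma AE_shift:
  assumes "AE y in \<mu>. P y"
  shows "AE x in \<mu>. P (x - 2)"
proof -
  from assms obtain N where N: "{y \<in> space \<mu>. \<not> P y} \<subseteq> N" "emeasure \<mu> N = 0" "N \<in> sets \<mu>"
    by (elim AE_E)
  have Nb: "N \<in> sets borel" using N(3) sets_cm by simp
  have "(\<lambda>x. x - 2) -` N \<in> null_sets \<mu>"
    using emeasure_shift[OF Nb] N(2) vimage_m2[OF Nb] by (simp add: null_sets_def)
  moreover have "{x \<in> space \<mu>. \<not> P (x - 2)} \<subseteq> (\<lambda>x. x - 2) -` N" using N(1) by auto
  ultimately show ?thesis by (rule AE_I')
qed



definition Jset :: "real set" where "Jset = {-1/4..5/4}"

definition zo :: "real set \<Rightarrow> (real \<Rightarrow> complex) \<Rightarrow> bool" where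
  "zo A f \<longleftrightarrow> (\<forall>x. x \<notin> A \<longrightarrow> f x = 0)"

lemma meas_cm: "(f :: real \<Rightarrow> 'b::topological_space) \<in> borel_measurable \<mu> \<longleftrightarrow> f \<in> borel_measurable borel"
proof -
  have "measurable \<mu> (borel :: 'b::topological_space measure) = measurable borel borel"
    by (rule measurable_cong_sets[OF sets_cm refl])
  then show ?thesis by simp
qed

lemma L2_meas: "in_L2 f \<Longrightarrow> f \<in> borel_measurable borel"
  unfolding in_L2_def using meas_cm by blast

lemma L2_int: "in_L2 f \<Longrightarrow> integrable \<mu> (\<lambda>x. (cmod (f x))\<^sup>2)"
  unfolding in_L2_def by blast

lemma L2I: "f \<in> borel_measurable borel \<Longrightarrow> integrable \<mu> (\<lambda>x. (cmod (f x))\<^sup>2) \<Longrightarrow> in_L2 f"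
  unfolding in_L2_def using meas_cm by blast

lemma L2_scale:
  assumes "in_L2 f"
  shows "in_L2 (\<lambda>x. f (3*x))" "L2_norm_sq (\<lambda>x. f (3*x)) = L2_norm_sq f / 2"
proof -
  have f[measurable]: "f \<in> borel_measurable borel" using L2_meas[OF assms] .
  have g: "(\<lambda>y. (cmod (f y))\<^sup>2) \<in> borel_measurable borel" by measurable
  show "in_L2 (\<lambda>x. f (3*x))"
    by (rule L2I) (use integral_scale(2)[OF g] L2_int[OF assms] in auto)
  show "L2_norm_sq (\<lambda>x. f (3*x)) = L2_norm_sq f / 2"
    unfolding L2_norm_sq_def using integral_scale(1)[OF g] by simp
qed

lemma L2_shift:
  assumes "in_L2 f"
  shows "in_L2 (\<lambda>x. f (x - 2))" "L2_norm_sq (\<lambda>x. f (x - 2)) = L2_norm_sq f"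
proof -
  have f[measurable]: "f \<in> borel_measurable borel" using L2_meas[OF assms] .
  have g: "(\<lambda>y. (cmod (f y))\<^sup>2) \<in> borel_measurable borel" by measurable
  show "in_L2 (\<lambda>x. f (x - 2))"
    by (rule L2I) (use integral_shift(2)[OF g] L2_int[OF assms] in auto)
  show "L2_norm_sq (\<lambda>x. f (x - 2)) = L2_norm_sq f"
    unfolding L2_norm_sq_def using integral_shift(1)[OF g] by simp
qed

lemma sq_ineq: "(cmod (a + b))\<^sup>2 \<le> 2*(cmod a)\<^sup>2 + 2*(cmod b)\<^sup>2"
proof -
  have "cmod (a + b) \<le> cmod a + cmod b" by (rule norm_triangle_ineq)
  then have "(cmod (a + b))\<^sup>2 \<le> (cmod a + cmod b)\<^sup>2" by (rule power_mono) simp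
  moreover have "(cmod a + cmod b)\<^sup>2 + (cmod a - cmod b)\<^sup>2 = 2*(cmod a)\<^sup>2 + 2*(cmod b)\<^sup>2"
    by (simp add: power2_eq_square algebra_simps)
  moreover have "0 \<le> (cmod a - cmod b)\<^sup>2" by simp
  ultimately show ?thesis by linarith
qed

lemma L2_add:
  assumes "in_L2 f" "in_L2 g"
  shows "in_L2 (\<lambda>x. f x + g x)"
proof (rule L2I)
  have [measurable]: "f \<in> borel_measurable borel" "g \<in> borel_measurable borel"
    using L2_meas assms by auto
  show "(\<lambda>x. f x + g x) \<in> borel_measurable borel" by measurable
  have i: "integrable \<mu> (\<lambda>x. 2*(cmod (f x))\<^sup>2 + 2*(cmod (g x))\<^sup>2)"
    using L2_int[OF assms(1)] L2_int[OF assms(2)] by auto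
  show "integrable \<mu> (\<lambda>x. (cmod (f x + g x))\<^sup>2)"
  proof (rule Bochner_Integration.integrable_bound[OF i])
    show "(\<lambda>x. (cmod (f x + g x))\<^sup>2) \<in> borel_measurable \<mu>" by measurable
    show "AE x in \<mu>. norm ((cmod (f x + g x))\<^sup>2) \<le> norm (2*(cmod (f x))\<^sup>2 + 2*(cmod (g x))\<^sup>2)"
      using sq_ineq by (auto intro!: always_eventually)
  qed
qed

lemma L2_cmult:
  assumes "in_L2 f"
  shows "in_L2 (\<lambda>x. c * f x)"
proof (rule L2I)
  have [measurable]: "f \<in> borel_measurable borel" using L2_meas assms by auto
  show "(\<lambda>x. c * f x) \<in> borel_measurable borel" by measurable
  have "integrable \<mu> (\<lambda>x. (cmod c)\<^sup>2 * (cmod (f x))\<^sup>2)" using L2_int[OF assms] by simp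
  then show "integrable \<mu> (\<lambda>x. (cmod (c * f x))\<^sup>2)" by (simp add: norm_mult power_mult_distrib)
qed

lemma L2_diff:
  assumes "in_L2 f" "in_L2 g"
  shows "in_L2 (\<lambda>x. f x - g x)"
proof -
  have "in_L2 (\<lambda>x. f x + (-1) * g x)" by (intro L2_add L2_cmult assms)
  then show ?thesis by simp
qed

lemma L2_cascade:
  assumes "in_L2 f"
  shows "in_L2 (cascade f)"
proof -
  have a: "in_L2 (\<lambda>x. f (3*x))" by (rule L2_scale(1)[OF assms])
  have "in_L2 (\<lambda>x. (\<lambda>y. f (y - 2)) (3*x))" by (rule L2_scale(1)[OF L2_shift(1)[OF assms]])
  then have b: "in_L2 (\<lambda>x. f (3*x - 2))" by simp
  show ?thesis unfolding cascade_def by (rule L2_add[OF a b])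
qed

lemma L2_pow: "in_L2 f \<Longrightarrow> in_L2 ((cascade ^^ n) f)"
  by (induction n) (auto intro: L2_cascade)

lemma cascade_diff: "cascade (\<lambda>x. f x - g x) = (\<lambda>x. cascade f x - cascade g x)"
  unfolding cascade_def by (rule ext) simp

lemma cascade_diff': "cascade (f - g) = cascade f - cascade g"
  using cascade_diff[of f g] by (simp add: fun_diff_def)

lemma zo_cascade: "zo A f \<Longrightarrow> zo {x. 3*x \<in> A \<or> 3*x - 2 \<in> A} (cascade f)"
  unfolding zo_def cascade_def by auto

lemma zo_cascade_int:
  assumes "zo {a..b} f"
  shows "zo {a/3..(b+2)/3} (cascade f)"
proof -
  have "{x. 3*x \<in> {a..b} \<or> 3*x - 2 \<in> {a..b}} \<subseteq> {a/3..(b+2)/3}" by auto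
  then show ?thesis using zo_cascade[OF assms] unfolding zo_def by blast
qed

lemma zo_mono: "zo A f \<Longrightarrow> A \<subseteq> B \<Longrightarrow> zo B f"
  unfolding zo_def by blast

lemma zo_J: "zo Jset f \<Longrightarrow> zo Jset (cascade f)"
proof -
  assume "zo Jset f"
  then have "zo {x. 3*x \<in> Jset \<or> 3*x - 2 \<in> Jset} (cascade f)" by (rule zo_cascade)
  moreover have "{x. 3*x \<in> Jset \<or> 3*x - 2 \<in> Jset} \<subseteq> Jset" unfolding Jset_def by auto
  ultimately show ?thesis by (rule zo_mono)
qed

lemma zo_J_pow: "zo Jset f \<Longrightarrow> zo Jset ((cascade ^^ n) f)"
  by (induction n) (auto intro: zo_J)

lemma zo_diff: "zo A f \<Longrightarrow> zo A g \<Longrightarrow> zo A (\<lambda>x. f x - g x)"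
  unfolding zo_def by auto

lemma cascade_iso:
  assumes f: "in_L2 f" and z: "zo Jset f"
  shows "L2_norm_sq (cascade f) = L2_norm_sq f"
proof -
  have fm[measurable]: "f \<in> borel_measurable borel" using L2_meas[OF f] .
  have pw: "(cmod (cascade f x))\<^sup>2 = (cmod (f (3*x)))\<^sup>2 + (cmod (f (3*x - 2)))\<^sup>2" for x
  proof (cases "3*x \<in> Jset")
    case True
    then have "3*x - 2 \<notin> Jset" unfolding Jset_def by auto
    then have "f (3*x - 2) = 0" using z unfolding zo_def by blast
    then show ?thesis unfolding cascade_def by simp
  next
    case False
    then have "f (3*x) = 0" using z unfolding zo_def by blast
    then show ?thesis unfolding cascade_def by simp
  qed
  have i1: "integrable \<mu> (\<lambda>x. (cmod (f (3*x)))\<^sup>2)" using L2_int[OF L2_scale(1)[OF f]] .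
  have sf: "in_L2 (\<lambda>x. (\<lambda>y. f (y - 2)) (3*x))" by (rule L2_scale(1)[OF L2_shift(1)[OF f]])
  have i2: "integrable \<mu> (\<lambda>x. (cmod (f (3*x - 2)))\<^sup>2)" using L2_int[OF sf] by simp
  have "L2_norm_sq (cascade f) = (\<integral>x. (cmod (f (3*x)))\<^sup>2 + (cmod (f (3*x - 2)))\<^sup>2 \<partial>\<mu>)"
    unfolding L2_norm_sq_def pw ..
  also have "\<dots> = L2_norm_sq (\<lambda>x. f (3*x)) + L2_norm_sq (\<lambda>x. (\<lambda>y. f (y - 2)) (3*x))"
    unfolding L2_norm_sq_def using i1 i2 by simp
  also have "\<dots> = L2_norm_sq f / 2 + L2_norm_sq (\<lambda>y. f (y - 2)) / 2"
    using L2_scale(2)[OF f] L2_scale(2)[OF L2_shift(1)[OF f]] by simp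
  also have "\<dots> = L2_norm_sq f" using L2_shift(2)[OF f] by simp
  finally show ?thesis .
qed

lemma cascade_AE:
  assumes "AE x in \<mu>. f x = g x"
  shows "AE x in \<mu>. cascade f x = cascade g x"
proof -
  have a: "AE x in \<mu>. f (3*x) = g (3*x)" by (rule AE_scale[OF assms])
  have "AE y in \<mu>. f (y - 2) = g (y - 2)" by (rule AE_shift[OF assms])
  then have b: "AE x in \<mu>. f (3*x - 2) = g (3*x - 2)" by (rule AE_scale)
  show ?thesis using a b unfolding cascade_def by eventually_elim simp
qed

lemma cascade_pow_AE:
  assumes "AE x in \<mu>. f x = g x"
  shows "AE x in \<mu>. (cascade ^^ n) f x = (cascade ^^ n) g x"
  by (induction n) (use assms cascade_AE in auto)

lemma L2_norm_AE:
  assumes "in_L2 f" "in_L2 g" "AE x in \<mu>. f x = g x"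
  shows "L2_norm_sq f = L2_norm_sq g"
  unfolding L2_norm_sq_def
proof (rule integral_cong_AE)
  have [measurable]: "f \<in> borel_measurable borel" "g \<in> borel_measurable borel"
    using L2_meas assms by auto
  show "(\<lambda>x. (cmod (f x))\<^sup>2) \<in> borel_measurable \<mu>" "(\<lambda>x. (cmod (g x))\<^sup>2) \<in> borel_measurable \<mu>"
    by measurable
  show "AE x in \<mu>. (cmod (f x))\<^sup>2 = (cmod (g x))\<^sup>2" using assms(3) by eventually_elim simp
qed

lemma cascade_inj:
  assumes z: "zo {-K..K} \<delta>" and c: "AE x in \<mu>. cascade \<delta> x = 0"
  shows "AE x in \<mu>. \<delta> x = 0"
proof -
  have "AE y in \<mu>. cascade \<delta> (y/3) = 0" by (rule AE_unscale[OF c])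
  then have b: "AE y in \<mu>. \<delta> y + \<delta> (y - 2) = 0" unfolding cascade_def by simp
  have "AE y in \<mu>. \<delta> (y - 2 * real k) + \<delta> (y - 2 * real k - 2) = 0" for k
  proof (induction k)
    case 0 then show ?case using b by simp
  next
    case (Suc k)
    have "AE y in \<mu>. \<delta> (y - 2 - 2 * real k) + \<delta> (y - 2 - 2 * real k - 2) = 0"
      by (rule AE_shift[OF Suc])
    then show ?case by eventually_elim (simp add: algebra_simps)
  qed
  then have "AE y in \<mu>. \<forall>k. \<delta> (y - 2 * real k) + \<delta> (y - 2 * real k - 2) = 0"
    by (simp add: AE_all_countable)
  then show ?thesis
  proof eventually_elim
    fix y assume h: "\<forall>k. \<delta> (y - 2 * real k) + \<delta> (y - 2 * real k - 2) = 0"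
    have p: "\<delta> y = (-1)^k * \<delta> (y - 2 * real k)" for k
    proof (induction k)
      case 0 then show ?case by simp
    next
      case (Suc k)
      have "\<delta> (y - 2 * real (Suc k)) = - \<delta> (y - 2 * real k)"
        using h[rule_format, of k] by (simp add: algebra_simps eq_neg_iff_add_eq_0)
      then show ?case using Suc by simp
    qed
    obtain k :: nat where k: "real k > (y + K) / 2" using reals_Archimedean2 by blast
    then have "y - 2 * real k \<notin> {-K..K}" by auto
    then have "\<delta> (y - 2 * real k) = 0" using z unfolding zo_def by blast
    then show "\<delta> y = 0" using p[of k] by simp
  qed
qed

lemma cascade_indC: "cascade (\<lambda>x. c * indicator cantor_set x) = (\<lambda>x. c * indicator cantor_set x)"
proof (rule ext)
  fix x
  have "(indicator cantor_set (3*x) + indicator cantor_set (3*x - 2) :: complex) = indicator cantor_set x"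
  proof (cases "x \<in> cantor_set")
    case True
    obtain a where a: "a \<in> {0,2::nat}" "3*x - real a \<in> cantor_set" using cantor_mul3[OF True] by blast
    show ?thesis
    proof (cases "a = 0")
      case True
      then have "3*x \<in> cantor_set" using a by simp
      then have "3*x - 2 \<notin> cantor_set" using cantor_01[of "3*x"] cantor_01[of "3*x - 2"] by force
      then show ?thesis using \<open>3*x \<in> cantor_set\<close> \<open>x \<in> cantor_set\<close> by simp
    next
      case False
      then have "3*x - 2 \<in> cantor_set" using a by simp
      then have "3*x \<notin> cantor_set" using cantor_01[of "3*x"] cantor_01[of "3*x - 2"] by force
      then show ?thesis using \<open>3*x - 2 \<in> cantor_set\<close> \<open>x \<in> cantor_set\<close> by simp
    qed
  next
    case False
    have "3*x \<notin> cantor_set" using cantor_div3(1)[of "3*x"] False by auto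
    moreover have "3*x - 2 \<notin> cantor_set" using cantor_div3(2)[of "3*x - 2"] False by auto
    ultimately show ?thesis using False by simp
  qed
  then show "cascade (\<lambda>x. c * indicator cantor_set x) x = c * indicator cantor_set x"
    unfolding cascade_def by (simp add: distrib_left[symmetric])
qed



declare cantor_borel[measurable]

primrec Wset :: "nat \<Rightarrow> real set" where
  "Wset 0 = {0}"
| "Wset (Suc n) = Wset n \<union> (\<lambda>w. w + 2 / 3 ^ Suc n) ` Wset n"

lemma Wset_finite: "finite (Wset n)"
  by (induction n) auto

lemma Wset_card: "card (Wset n) \<le> 2 ^ n"
proof (induction n)
  case 0 then show ?case by simp
next
  case (Suc n)
  have "card (Wset (Suc n)) \<le> card (Wset n) + card ((\<lambda>w. w + 2 / 3 ^ Suc n) ` Wset n)"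
    by (simp add: card_Un_le)
  also have "\<dots> \<le> card (Wset n) + card (Wset n)" using card_image_le[OF Wset_finite] by simp
  finally show ?case using Suc by simp
qed

lemma partial_in_Wset:
  assumes "digits02 d"
  shows "(\<Sum>i<n. real (d i) / 3 ^ Suc i) \<in> Wset n"
proof (induction n)
  case 0 then show ?case by simp
next
  case (Suc n)
  have "d n \<in> {0,2}" using assms unfolding digits02_def by blast
  then show ?case
  proof
    assume "d n = 0" then show ?thesis using Suc by simp
  next
    assume "d n \<in> {2}"
    then have "(\<Sum>i<Suc n. real (d i) / 3 ^ Suc i) = (\<Sum>i<n. real (d i) / 3 ^ Suc i) + 2 / 3 ^ Suc n"
      by simp
    then show ?thesis using Suc by simp
  qed
qed

lemma cs_tail:
  assumes d: "digits02 d"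
  shows "(\<Sum>i<n. real (d i) / 3 ^ Suc i) \<le> cs d \<and> cs d \<le> (\<Sum>i<n. real (d i) / 3 ^ Suc i) + 1 / 3^n"
proof -
  let ?f = "\<lambda>k. real (d k) / 3 ^ Suc k"
  have dn: "digits02 (\<lambda>k. d (k + n))" using d unfolding digits02_def by blast
  have "cs d = (\<Sum>k. ?f (k + n)) + (\<Sum>i<n. ?f i)"
    unfolding cs_def by (rule suminf_split_initial_segment[OF cs_summable[OF d]])
  moreover have "(\<lambda>k. ?f (k + n)) = (\<lambda>k. (1/3^n) * (real (d (k + n)) / 3 ^ Suc k))"
    by (rule ext) (simp add: power_add)
  moreover have "(\<Sum>k. (1/3^n) * (real (d (k + n)) / 3 ^ Suc k)) = (1/3^n) * cs (\<lambda>k. d (k + n))"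
    unfolding cs_def by (rule suminf_mult[OF cs_summable[OF dn]])
  ultimately have e: "cs d = (1/3^n) * cs (\<lambda>k. d (k + n)) + (\<Sum>i<n. ?f i)" by simp
  have b: "0 \<le> cs (\<lambda>k. d (k + n))" "cs (\<lambda>k. d (k + n)) \<le> 1" using cs_bounds[OF dn] by auto
  have "0 \<le> (1/3^n) * cs (\<lambda>k. d (k + n))" using b by simp
  moreover have "(1/3^n) * cs (\<lambda>k. d (k + n)) \<le> 1/3^n" using b by (simp add: divide_right_mono)
  ultimately show ?thesis using e by linarith
qed

lemma Hs_C_le: "Hs cantor_set \<le> 1"
  unfolding hausdorff_outer_def
proof (rule SUP_least)
  fix \<delta> :: real assume "\<delta> \<in> {0<..}"
  then have \<delta>: "\<delta> > 0" by simp
  obtain n :: nat where n: "(1/3::real)^n < \<delta>" using real_arch_pow_inv[OF \<delta>, of "1/3"] by auto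
  define L where "L = sorted_list_of_set (Wset n)"
  define N where "N = length L"
  have setL: "set L = Wset n" unfolding L_def using Wset_finite by simp
  have NW: "N = card (Wset n)" unfolding N_def L_def by simp
  define h :: real where "h = 1/3^n"
  have h0: "h > 0" unfolding h_def by simp
  have hd: "h < \<delta>" using n unfolding h_def by (simp add: power_one_over)
  define U where "U i = (if i < N then {L!i .. L!i + h} else {})" for i
  have cover: "cantor_set \<subseteq> (\<Union>i. U i)"
  proof
    fix x assume "x \<in> cantor_set"
    then obtain d where d: "digits02 d" "x = cs d" unfolding cantor_set_iff by (elim exE conjE)
    let ?p = "\<Sum>i<n. real (d i) / 3 ^ Suc i"
    have "?p \<in> set L" using partial_in_Wset[OF d(1)] setL by simp
    then obtain i where i: "i < N" "L!i = ?p" unfolding N_def by (auto simp: in_set_conv_nth)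
    have "x \<in> U i" using cs_tail[OF d(1), of n] d(2) i unfolding U_def h_def by simp
    then show "x \<in> (\<Union>i. U i)" by blast
  qed
  have Ub: "\<forall>i. bounded (U i) \<and> diameter (U i) \<le> \<delta>"
    using h0 hd \<delta> unfolding U_def by auto
  have "hausdorff_delta (log 3 2) \<delta> cantor_set \<le> (\<Sum>i. ennreal (diameter (U i) powr log 3 2))"
    unfolding hausdorff_delta_def by (rule INF_lower) (use cover Ub in blast)
  also have "\<dots> = (\<Sum>i<N. ennreal (diameter (U i) powr log 3 2))"
    by (rule suminf_finite) (auto simp: U_def)
  also have "\<dots> = (\<Sum>i<N. ennreal ((1/2)^n))"
  proof (rule sum.cong)
    fix i assume "i \<in> {..<N}"
    then have "diameter (U i) = h" using h0 unfolding U_def by simp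
    moreover have "h powr log 3 2 = (1/2)^n"
    proof -
      have "h powr log 3 2 = ((1/3) powr log 3 2) ^ n"
        unfolding h_def by (simp add: powr_power power_one_over[symmetric] powr_powr[symmetric] powr_realpow)
      then show ?thesis by (simp add: pow13s)
    qed
    ultimately show "ennreal (diameter (U i) powr log 3 2) = ennreal ((1/2)^n)" by simp
  qed simp
  also have "\<dots> = ennreal (real N * (1/2)^n)"
    by (simp add: ennreal_of_nat_eq_real_of_nat ennreal_mult)
  also have "\<dots> \<le> ennreal 1"
  proof (rule ennreal_leI)
    have "real N \<le> 2^n" using Wset_card[of n] NW by (simp add: of_nat_le_iff[symmetric])
    then have "real N * (1/2)^n \<le> 2^n * (1/2::real)^n" by (rule mult_right_mono) simp
    also have "\<dots> = 1" by (simp add: power_mult_distrib[symmetric])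
    finally show "real N * (1/2)^n \<le> 1" .
  qed
  finally show "hausdorff_delta (log 3 2) \<delta> cantor_set \<le> 1" by simp
qed

lemma emeasure_C_fin: "emeasure \<mu> cantor_set < \<infinity>"
proof -
  have "emeasure \<mu> cantor_set \<le> Hs cantor_set"
    using emeasure_cm[OF cantor_borel] cantor_sub_R by (auto simp: Int_absorb2)
  also have "\<dots> \<le> 1" by (rule Hs_C_le)
  finally show ?thesis by (simp add: le_less_trans)
qed



lemma indC_scaleR: "(a * indicator cantor_set x :: complex) = indicator cantor_set x *\<^sub>R a"
  by (simp add: indicator_def)

lemma complex_density_zero:
  fixes f :: "real \<Rightarrow> complex"
  assumes fi: "integrable M f" and z: "\<And>A. A \<in> sets M \<Longrightarrow> set_lebesgue_integral M A f = 0"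
  shows "AE x in M. f x = 0"
proof -
  have re: "set_lebesgue_integral M A (\<lambda>x. Re (f x)) = set_lebesgue_integral M A (\<lambda>x. 0)"
    if A: "A \<in> sets M" for A
  proof -
    have "set_lebesgue_integral M A (\<lambda>x. Re (f x)) = (\<integral>x. Re (indicator A x *\<^sub>R f x) \<partial>M)"
      unfolding set_lebesgue_integral_def by simp
    also have "\<dots> = Re (set_lebesgue_integral M A f)"
      unfolding set_lebesgue_integral_def by (rule integral_Re) (rule integrable_mult_indicator[OF A fi])
    finally show ?thesis using z[OF A] by simp
  qed
  have im: "set_lebesgue_integral M A (\<lambda>x. Im (f x)) = set_lebesgue_integral M A (\<lambda>x. 0)"
    if A: "A \<in> sets M" for A
  proof -
    have "set_lebesgue_integral M A (\<lambda>x. Im (f x)) = (\<integral>x. Im (indicator A x *\<^sub>R f x) \<partial>M)"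
      unfolding set_lebesgue_integral_def by simp
    also have "\<dots> = Im (set_lebesgue_integral M A f)"
      unfolding set_lebesgue_integral_def by (rule integral_Im) (rule integrable_mult_indicator[OF A fi])
    finally show ?thesis using z[OF A] by simp
  qed
  have "AE x in M. Re (f x) = 0"
    by (rule density_unique_real) (use re fi in auto)
  moreover have "AE x in M. Im (f x) = 0"
    by (rule density_unique_real) (use im fi in auto)
  ultimately show ?thesis by eventually_elim (simp add: complex_eq_iff)
qed

lemma fixed_point:
  assumes eta: "in_L2 \<eta>" and z: "zo Jset \<eta>" and fx: "AE x in \<mu>. cascade \<eta> x = \<eta> x"
  shows "\<exists>a. AE x in \<mu>. \<eta> x = a * indicator cantor_set x"
proof -
  have em[measurable]: "\<eta> \<in> borel_measurable borel" using L2_meas[OF eta] .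
  have powfix: "AE x in \<mu>. (cascade ^^ n) \<eta> x = \<eta> x" for n
  proof (induction n)
    case 0 then show ?case by simp
  next
    case (Suc n)
    have "AE x in \<mu>. cascade ((cascade ^^ n) \<eta>) x = cascade \<eta> x" by (rule cascade_AE[OF Suc])
    then show ?case using fx by eventually_elim simp
  qed
  have zS: "zo (Sset n) ((cascade ^^ n) \<eta>)" for n
  proof (induction n)
    case 0 then show ?case using z by (simp add: Jset_def)
  next
    case (Suc n)
    show ?case using zo_cascade[OF Suc] by simp
  qed
  have supp: "AE x in \<mu>. x \<notin> cantor_set \<longrightarrow> \<eta> x = 0"
  proof -
    have "AE x in \<mu>. \<forall>n. (cascade ^^ n) \<eta> x = \<eta> x" using powfix by (simp add: AE_all_countable)
    then show ?thesis
    proof eventually_elim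
      fix x assume h: "\<forall>n. (cascade ^^ n) \<eta> x = \<eta> x"
      show "x \<notin> cantor_set \<longrightarrow> \<eta> x = 0"
      proof
        assume "x \<notin> cantor_set"
        then obtain n where "x \<notin> Sset n" unfolding cantor_eq_Sset by blast
        then have "(cascade ^^ n) \<eta> x = 0" using zS[of n] unfolding zo_def by blast
        then show "\<eta> x = 0" using h by simp
      qed
    qed
  qed
  show ?thesis
  proof (cases "emeasure \<mu> cantor_set = 0")
    case True
    have "cantor_set \<in> null_sets \<mu>" using True cantor_borel sets_cm by (simp add: null_sets_def)
    then have "AE x in \<mu>. x \<notin> cantor_set" by (rule AE_not_in)
    then have "AE x in \<mu>. \<eta> x = 0 * indicator cantor_set x" using supp by eventually_elim simp
    then show ?thesis by blast
  next
    case False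
    have Cs: "cantor_set \<in> sets \<mu>" using cantor_borel sets_cm by simp
    have Cfin: "emeasure \<mu> cantor_set < \<infinity>" by (rule emeasure_C_fin)
    define m where "m = measure \<mu> cantor_set"
    have em_m: "emeasure \<mu> cantor_set = ennreal m"
      unfolding m_def using Cfin by (simp add: emeasure_eq_ennreal_measure less_top)
    have m0: "m > 0" using False em_m unfolding m_def
      by (metis ennreal_0 measure_nonneg order_le_less)
    have iC: "integrable \<mu> (indicator cantor_set :: real \<Rightarrow> real)"
      by (rule integrable_real_indicator[OF Cs Cfin])
    have eta_int: "integrable \<mu> \<eta>"
    proof (rule Bochner_Integration.integrable_bound)
      show "integrable \<mu> (\<lambda>x. indicator cantor_set x + indicator cantor_set x *\<^sub>R (cmod (\<eta> x))\<^sup>2)"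
        using iC integrable_mult_indicator[OF Cs L2_int[OF eta]] by simp
      show "\<eta> \<in> borel_measurable \<mu>" by measurable
      show "AE x in \<mu>. norm (\<eta> x) \<le> norm (indicator cantor_set x + indicator cantor_set x *\<^sub>R (cmod (\<eta> x))\<^sup>2)"
        using supp
      proof eventually_elim
        fix x assume h: "x \<notin> cantor_set \<longrightarrow> \<eta> x = 0"
        show "norm (\<eta> x) \<le> norm (indicator cantor_set x + indicator cantor_set x *\<^sub>R (cmod (\<eta> x))\<^sup>2)"
        proof (cases "x \<in> cantor_set")
          case True
          have "cmod (\<eta> x) \<le> 1 + (cmod (\<eta> x))\<^sup>2"
          proof (cases "cmod (\<eta> x) \<le> 1")
            case True then show ?thesis by (smt (verit) zero_le_power2)
          next
            case False
            then have "cmod (\<eta> x) * 1 \<le> cmod (\<eta> x) * cmod (\<eta> x)" by (intro mult_left_mono) auto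
            then show ?thesis by (simp add: power2_eq_square)
          qed
          then show ?thesis using True by simp
        next
          case False then show ?thesis using h by simp
        qed
      qed
    qed
    define S where "S = integral\<^sup>L \<mu> \<eta>"
    define a where "a = S / complex_of_real m"
    define f where "f x = \<eta> x - a * indicator cantor_set x" for x
    have fm[measurable]: "f \<in> borel_measurable borel" unfolding f_def by measurable
    have iaC: "integrable \<mu> (\<lambda>x. indicator cantor_set x *\<^sub>R a)"
      using iC by (rule integrable_scaleR_left)
    have f_int: "integrable \<mu> f"
      unfolding f_def indC_scaleR using eta_int iaC by (rule Bochner_Integration.integrable_diff)
    have f_sum: "integral\<^sup>L \<mu> f = 0"
    proof -
      have "integral\<^sup>L \<mu> f = S - (\<integral>x. indicator cantor_set x *\<^sub>R a \<partial>\<mu>)"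
        unfolding f_def indC_scaleR S_def using eta_int iaC by (rule Bochner_Integration.integral_diff)
      also have "(\<integral>x. indicator cantor_set x *\<^sub>R a \<partial>\<mu>) = m *\<^sub>R a"
        by (subst integral_scaleR_left) (simp_all add: m_def iC)
      also have "m *\<^sub>R a = S" unfolding a_def using m0 by (simp add: scaleR_conv_of_real)
      finally show ?thesis by simp
    qed
    have f_fix: "AE x in \<mu>. cascade f x = f x"
    proof -
      have "cascade f = (\<lambda>x. cascade \<eta> x - cascade (\<lambda>x. a * indicator cantor_set x) x)"
        unfolding f_def by (rule cascade_diff)
      then have "cascade f = (\<lambda>x. cascade \<eta> x - a * indicator cantor_set x)"
        by (simp add: cascade_indC)
      then show ?thesis using fx by (simp add: f_def)
    qed
    have f_supp: "AE x in \<mu>. x \<notin> cantor_set \<longrightarrow> f x = 0"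
      using supp by eventually_elim (simp add: f_def)
    define F where "F t = set_lebesgue_integral \<mu> {..t} f" for t
    have ind_int: "integrable \<mu> (\<lambda>x. indicator A x *\<^sub>R f x)" if "A \<in> sets borel" for A
      using integrable_mult_indicator[of A \<mu> f] that f_int sets_cm by simp
    have FE: "F t = (1/2) *\<^sub>R (F (3*t) + F (3*t - 2))" for t
    proof -
      define h1 where "h1 y = indicator {..3*t} y *\<^sub>R f y" for y
      define h3 where "h3 y = indicator {..3*t-2} y *\<^sub>R f y" for y
      define h2 where "h2 y = h3 (y - 2)" for y
      have [measurable]: "h1 \<in> borel_measurable borel" "h3 \<in> borel_measurable borel"
        unfolding h1_def h3_def by measurable
      have [measurable]: "h2 \<in> borel_measurable borel" unfolding h2_def by measurable
      have i1: "integrable \<mu> h1" unfolding h1_def by (rule ind_int) simp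
      have i3: "integrable \<mu> h3" unfolding h3_def by (rule ind_int) simp
      have i2: "integrable \<mu> h2" unfolding h2_def using integral_shift(2)[of h3] i3 by simp
      have i1': "integrable \<mu> (\<lambda>x. h1 (3*x))" using integral_scale(2)[of h1] i1 by simp
      have i2': "integrable \<mu> (\<lambda>x. h2 (3*x))" using integral_scale(2)[of h2] i2 by simp
      have "F t = (\<integral>x. indicator {..t} x *\<^sub>R f x \<partial>\<mu>)" unfolding F_def set_lebesgue_integral_def ..
      also have "\<dots> = (\<integral>x. h1 (3*x) + h2 (3*x) \<partial>\<mu>)"
      proof (rule integral_cong_AE)
        show "(\<lambda>x. indicator {..t} x *\<^sub>R f x) \<in> borel_measurable \<mu>" by measurable
        show "(\<lambda>x. h1 (3*x) + h2 (3*x)) \<in> borel_measurable \<mu>" by measurable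
        show "AE x in \<mu>. indicator {..t} x *\<^sub>R f x = h1 (3*x) + h2 (3*x)"
          using f_fix
        proof eventually_elim
          fix x assume "cascade f x = f x"
          then have "f x = f (3*x) + f (3*x - 2)" unfolding cascade_def by simp
          moreover have "indicator {..t} x = (indicator {..3*t} (3*x) :: real)"
            by (simp add: indicator_def)
          moreover have "indicator {..t} x = (indicator {..3*t-2} (3*x-2) :: real)"
            by (simp add: indicator_def)
          ultimately show "indicator {..t} x *\<^sub>R f x = h1 (3*x) + h2 (3*x)"
            unfolding h1_def h2_def h3_def by (simp add: scaleR_add_right)
        qed
      qed
      also have "\<dots> = (\<integral>x. h1 (3*x) \<partial>\<mu>) + (\<integral>x. h2 (3*x) \<partial>\<mu>)"
        using i1' i2' by (rule Bochner_Integration.integral_add)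
      also have "(\<integral>x. h1 (3*x) \<partial>\<mu>) = (1/2) *\<^sub>R F (3*t)"
        using integral_scale(1)[of h1] unfolding F_def set_lebesgue_integral_def h1_def by simp
      also have "(\<integral>x. h2 (3*x) \<partial>\<mu>) = (1/2) *\<^sub>R (\<integral>y. h2 y \<partial>\<mu>)"
        using integral_scale(1)[of h2] by simp
      also have "(\<integral>y. h2 y \<partial>\<mu>) = F (3*t - 2)"
        using integral_shift(1)[of h3] unfolding h2_def F_def set_lebesgue_integral_def h3_def by simp
      finally show ?thesis by (simp add: scaleR_add_right)
    qed
    have F_neg: "F t = 0" if "t < 0" for t
    proof -
      have "F t = (\<integral>x. indicator {..t} x *\<^sub>R f x \<partial>\<mu>)" unfolding F_def set_lebesgue_integral_def ..
      also have "\<dots> = (\<integral>x. 0 \<partial>\<mu>)"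
      proof (rule integral_cong_AE)
        show "(\<lambda>x. indicator {..t} x *\<^sub>R f x) \<in> borel_measurable \<mu>" by measurable
        show "(\<lambda>x. 0::complex) \<in> borel_measurable \<mu>" by simp
        show "AE x in \<mu>. indicator {..t} x *\<^sub>R f x = 0" using f_supp
        proof eventually_elim
          fix x assume h: "x \<notin> cantor_set \<longrightarrow> f x = 0"
          show "indicator {..t} x *\<^sub>R f x = 0"
          proof (cases "x \<le> t")
            case True
            then have "x \<notin> cantor_set" using cantor_01[of x] that by auto
            then show ?thesis using h by simp
          qed simp
        qed
      qed
      finally show ?thesis by simp
    qed
    have F_big: "F t = 0" if "t \<ge> 1" for t
    proof -
      have "F t = (\<integral>x. indicator {..t} x *\<^sub>R f x \<partial>\<mu>)" unfolding F_def set_lebesgue_integral_def ..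
      also have "\<dots> = (\<integral>x. f x \<partial>\<mu>)"
      proof (rule integral_cong_AE)
        show "(\<lambda>x. indicator {..t} x *\<^sub>R f x) \<in> borel_measurable \<mu>" by measurable
        show "f \<in> borel_measurable \<mu>" by measurable
        show "AE x in \<mu>. indicator {..t} x *\<^sub>R f x = f x" using f_supp
        proof eventually_elim
          fix x assume h: "x \<notin> cantor_set \<longrightarrow> f x = 0"
          show "indicator {..t} x *\<^sub>R f x = f x"
          proof (cases "x \<in> cantor_set")
            case True
            then have "x \<le> t" using cantor_01[of x] that by auto
            then show ?thesis by simp
          next
            case False then show ?thesis using h by simp
          qed
        qed
      qed
      finally show ?thesis using f_sum by simp
    qed
    define K where "K = (\<integral>x. norm (f x) \<partial>\<mu>)"
    have Fb: "norm (F t) \<le> K" for t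
    proof -
      have "norm (F t) = norm (\<integral>x. indicator {..t} x *\<^sub>R f x \<partial>\<mu>)"
        unfolding F_def set_lebesgue_integral_def ..
      also have "\<dots> \<le> (\<integral>x. norm (indicator {..t} x *\<^sub>R f x) \<partial>\<mu>)"
        by (rule integral_norm_bound)
      also have "\<dots> \<le> (\<integral>x. norm (f x) \<partial>\<mu>)"
      proof (rule integral_mono)
        show "integrable \<mu> (\<lambda>x. norm (indicator {..t} x *\<^sub>R f x))"
          by (rule integrable_norm) (rule ind_int, simp)
        show "integrable \<mu> (\<lambda>x. norm (f x))" by (rule integrable_norm[OF f_int])
      qed (auto simp: indicator_def)
      finally show ?thesis unfolding K_def .
    qed
    have Fn: "norm (F t) \<le> K / 2^n" for n t
    proof (induction n arbitrary: t)
      case 0 then show ?case using Fb by simp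
    next
      case (Suc n)
      show ?case
      proof (cases "t < 0 \<or> t \<ge> 1")
        case True
        then have "F t = 0" using F_neg F_big by auto
        moreover have "0 \<le> K" unfolding K_def by simp
        ultimately show ?thesis by simp
      next
        case False
        show ?thesis
        proof (cases "t < 1/2")
          case True
          then have "F (3*t - 2) = 0" by (intro F_neg) simp
          then have "norm (F t) = norm (F (3*t)) / 2" using FE[of t] by simp
          then show ?thesis using Suc[of "3*t"] by (simp add: divide_right_mono)
        next
          case False
          then have "F (3*t) = 0" by (intro F_big) simp
          then have "norm (F t) = norm (F (3*t - 2)) / 2" using FE[of t] by simp
          then show ?thesis using Suc[of "3*t-2"] by (simp add: divide_right_mono)
        qed
      qed
    qed
    have F0: "F t = 0" for t
    proof -
      have "(\<lambda>n. K / 2^n) \<longlonglongrightarrow> 0"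
        by (intro tendsto_divide_0[OF tendsto_const] filterlim_realpow_sequentially_gt1) simp
      then have "norm (F t) \<le> 0"
        by (rule tendsto_le[OF trivial_limit_sequentially _ tendsto_const]) (use Fn in auto)
      then show ?thesis by simp
    qed
    have all0: "set_lebesgue_integral \<mu> A f = 0" if A: "A \<in> sets \<mu>" for A
    proof -
      have Asig: "A \<in> sigma_sets UNIV (range atMost)"
        using A sets_cm borel_eq_atMost by (metis sets_measure_of top_greatest Pow_UNIV)
      have IS: "Int_stable (range atMost :: real set set)"
        unfolding Int_stable_def by (auto simp: Int_atMost)
      have PW: "range atMost \<subseteq> Pow (UNIV :: real set)" by simp
      from IS PW Asig show ?thesis
      proof (induction rule: sigma_sets_induct_disjoint)
        case (basic A)
        then obtain t where "A = {..t}" by auto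
        then show ?case using F0 unfolding F_def by simp
      next
        case empty
        then show ?case by (simp add: set_lebesgue_integral_def)
      next
        case (compl A)
        have Ab: "A \<in> sets borel"
          using compl(1) borel_eq_atMost by (metis sets_measure_of top_greatest Pow_UNIV)
        have "set_lebesgue_integral \<mu> (UNIV - A) f = (\<integral>x. f x - indicator A x *\<^sub>R f x \<partial>\<mu>)"
          unfolding set_lebesgue_integral_def by (rule Bochner_Integration.integral_cong) (auto simp: indicator_def)
        also have "\<dots> = (\<integral>x. f x \<partial>\<mu>) - (\<integral>x. indicator A x *\<^sub>R f x \<partial>\<mu>)"
          using f_int ind_int[OF Ab] by (rule Bochner_Integration.integral_diff)
        also have "\<dots> = 0" using f_sum compl(2) unfolding set_lebesgue_integral_def by simp
        finally show ?case .
      next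
        case (union A)
        have Ab: "A i \<in> sets borel" for i
          using union(2) borel_eq_atMost by (metis rangeI subsetD sets_measure_of top_greatest Pow_UNIV)
        have "set_lebesgue_integral \<mu> (\<Union>i. A i) f = (\<Sum>i. set_lebesgue_integral \<mu> (A i) f)"
        proof (rule lebesgue_integral_countable_add)
          show "A i \<in> sets \<mu>" for i using Ab sets_cm by simp
          show "A i \<inter> A j = {}" if "i \<noteq> j" for i j
            using union(1) that unfolding disjoint_family_on_def by auto
          show "set_integrable \<mu> (\<Union>i. A i) f"
            unfolding set_integrable_def by (rule ind_int) (use Ab in auto)
        qed
        also have "\<dots> = 0" using union(3) by simp
        finally show ?case .
      qed
    qed
    have "AE x in \<mu>. f x = 0" by (rule complex_density_zero[OF f_int all0])
    then have "AE x in \<mu>. \<eta> x = a * indicator cantor_set x"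
      by eventually_elim (simp add: f_def)
    then show ?thesis by blast
  qed
qed



lemma cascade_pow_diff: "(cascade ^^ k) (\<lambda>x. f x - g x) = (\<lambda>x. (cascade ^^ k) f x - (cascade ^^ k) g x)"
proof (induction k)
  case 0 then show ?case by simp
next
  case (Suc k)
  then show ?case by (simp add: cascade_diff)
qed

lemma cascade_pow_indC: "(cascade ^^ k) (\<lambda>x. c * indicator cantor_set x) = (\<lambda>x. c * indicator cantor_set x)"
  by (induction k) (simp_all add: cascade_indC)

lemma cascade_pow_inj:
  assumes "zo {-K..K} \<delta>" "AE x in \<mu>. (cascade ^^ n) \<delta> x = 0"
  shows "AE x in \<mu>. \<delta> x = 0"
  using assms
proof (induction n arbitrary: \<delta> K)
  case 0 then show ?case by simp
next
  case (Suc n)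
  have z1: "zo {-K/3..(K+2)/3} (cascade \<delta>)" using zo_cascade_int[OF Suc.prems(1)] by simp
  have z2: "zo {-(\<bar>K\<bar>+2)..\<bar>K\<bar>+2} (cascade \<delta>)" by (rule zo_mono[OF z1]) auto
  have e: "(cascade ^^ Suc n) \<delta> = (cascade ^^ n) (cascade \<delta>)"
    by (simp only: funpow_Suc_right o_apply)
  have "AE x in \<mu>. (cascade ^^ n) (cascade \<delta>) x = 0"
    using Suc.prems(2) unfolding e .
  then have "AE x in \<mu>. cascade \<delta> x = 0" by (rule Suc.IH[OF z2])
  then show ?case by (rule cascade_inj[OF Suc.prems(1)])
qed

lemma L2_norm_nonneg: "0 \<le> L2_norm_sq f"
  unfolding L2_norm_sq_def by simp

lemma L2_tri:
  assumes f: "in_L2 f" and g: "in_L2 g" and h: "in_L2 h"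
  shows "L2_norm_sq (\<lambda>x. f x - g x) \<le> 2 * L2_norm_sq (\<lambda>x. f x - h x) + 2 * L2_norm_sq (\<lambda>x. g x - h x)"
proof -
  have i1: "integrable \<mu> (\<lambda>x. (cmod (f x - g x))\<^sup>2)" using L2_int[OF L2_diff[OF f g]] .
  have i2: "integrable \<mu> (\<lambda>x. (cmod (f x - h x))\<^sup>2)" using L2_int[OF L2_diff[OF f h]] .
  have i3: "integrable \<mu> (\<lambda>x. (cmod (g x - h x))\<^sup>2)" using L2_int[OF L2_diff[OF g h]] .
  have "L2_norm_sq (\<lambda>x. f x - g x) \<le> (\<integral>x. 2 * (cmod (f x - h x))\<^sup>2 + 2 * (cmod (g x - h x))\<^sup>2 \<partial>\<mu>)"
    unfolding L2_norm_sq_def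
  proof (rule integral_mono)
    fix x
    have "(cmod (f x - g x))\<^sup>2 = (cmod ((f x - h x) + (h x - g x)))\<^sup>2" by simp
    also have "\<dots> \<le> 2 * (cmod (f x - h x))\<^sup>2 + 2 * (cmod (h x - g x))\<^sup>2" by (rule sq_ineq)
    also have "cmod (h x - g x) = cmod (g x - h x)" by (rule norm_minus_commute)
    finally show "(cmod (f x - g x))\<^sup>2 \<le> 2 * (cmod (f x - h x))\<^sup>2 + 2 * (cmod (g x - h x))\<^sup>2" .
  qed (use i1 i2 i3 in auto)
  also have "\<dots> = 2 * L2_norm_sq (\<lambda>x. f x - h x) + 2 * L2_norm_sq (\<lambda>x. g x - h x)"
    unfolding L2_norm_sq_def using i2 i3 by simp
  finally show ?thesis .
qed

theorem proposition3p10: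
  fixes \<xi> :: "real \<Rightarrow> complex"
  assumes "in_L2 \<xi>"
    and "\<exists>B::real. AE x in cantor_measure. B < \<bar>x\<bar> \<longrightarrow> \<xi> x = 0"
    and "\<not> (\<exists>c::complex. AE x in cantor_measure. \<xi> x = c * indicator cantor_set x)"
  shows "(\<exists>c>0. (\<lambda>n. L2_norm_sq ((cascade ^^ Suc n) \<xi> - (cascade ^^ n) \<xi>)) \<longlonglongrightarrow> c)
         \<and> \<not> (\<exists>\<eta>. in_L2 \<eta> \<and> (\<lambda>n. L2_norm_sq ((cascade ^^ n) \<xi> - \<eta>)) \<longlonglongrightarrow> 0)"
proof -
  have xi: "in_L2 \<xi>" by fact
  have xim[measurable]: "\<xi> \<in> borel_measurable borel" using L2_meas[OF xi] .
  obtain B where B: "AE x in \<mu>. B < \<bar>x\<bar> \<longrightarrow> \<xi> x = 0" using assms(2) by blast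
  define B0 where "B0 = max B 1"
  have B01: "B0 \<ge> 1" unfolding B0_def by simp
  define \<xi>0 where "\<xi>0 x = indicator {-B0..B0} x * \<xi> x" for x
  have x0m[measurable]: "\<xi>0 \<in> borel_measurable borel" unfolding \<xi>0_def by measurable
  have ae0: "AE x in \<mu>. \<xi> x = \<xi>0 x" using B
  proof eventually_elim
    fix x assume h: "B < \<bar>x\<bar> \<longrightarrow> \<xi> x = 0"
    show "\<xi> x = \<xi>0 x"
    proof (cases "x \<in> {-B0..B0}")
      case True then show ?thesis by (simp add: \<xi>0_def)
    next
      case False
      then have "B < \<bar>x\<bar>" unfolding B0_def by auto
      then show ?thesis using h False by (simp add: \<xi>0_def)
    qed
  qed
  have xi0: "in_L2 \<xi>0"
  proof (rule L2I)
    show "\<xi>0 \<in> borel_measurable borel" by measurable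
    show "integrable \<mu> (\<lambda>x. (cmod (\<xi>0 x))\<^sup>2)"
    proof (rule integrable_cong_AE_imp[OF L2_int[OF xi]])
      show "(\<lambda>x. (cmod (\<xi>0 x))\<^sup>2) \<in> borel_measurable \<mu>" by measurable
      show "AE x in \<mu>. (cmod (\<xi> x))\<^sup>2 = (cmod (\<xi>0 x))\<^sup>2" using ae0 by eventually_elim simp
    qed
  qed
  have z0: "zo {-B0..B0} \<xi>0" unfolding zo_def \<xi>0_def by simp
  define X where "X n = (cascade ^^ n) \<xi>" for n
  define Y where "Y n = (cascade ^^ n) \<xi>0" for n
  have XL: "in_L2 (X n)" for n unfolding X_def by (rule L2_pow[OF xi])
  have YL: "in_L2 (Y n)" for n unfolding Y_def by (rule L2_pow[OF xi0])
  have XY: "AE x in \<mu>. X n x = Y n x" for n unfolding X_def Y_def by (rule cascade_pow_AE[OF ae0])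
  have zY: "zo {-(B0/3^n)..1 + B0/3^n} (Y n)" for n
  proof (induction n)
    case 0
    have "zo {-(B0/3^0)..1 + B0/3^0} \<xi>0" by (rule zo_mono[OF z0]) auto
    then show ?case unfolding Y_def by simp
  next
    case (Suc n)
    have zz: "zo {-(B0/3^n)/3..(1 + B0/3^n + 2)/3} (cascade (Y n))" by (rule zo_cascade_int[OF Suc])
    have e1: "-(B0/3^n)/3 = -(B0/3^Suc n)" and e2: "(1 + B0/3^n + 2)/3 = 1 + B0/3^Suc n"
      by (simp_all add: field_simps)
    have "zo {-(B0/3^Suc n)..1 + B0/3^Suc n} (cascade (Y n))"
      unfolding e1[symmetric] e2[symmetric] by (rule zz)
    then show ?case unfolding Y_def by simp
  qed
  obtain N :: nat where N: "(1/3::real)^N < 1/(4*B0)"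
    using real_arch_pow_inv[of "1/(4*B0)" "1/3"] B01 by auto
  have BN: "B0/3^N \<le> 1/4"
  proof -
    have "B0 * (1/3)^N \<le> B0 * (1/(4*B0))" using N B01 by (intro mult_left_mono) auto
    then show ?thesis using B01 by (simp add: power_one_over)
  qed
  define \<eta> where "\<eta> = Y N"
  have zeta: "zo Jset \<eta>" unfolding \<eta>_def Jset_def by (rule zo_mono[OF zY]) (use BN in auto)
  have etaL: "in_L2 \<eta>" unfolding \<eta>_def by (rule YL)
  define D where "D x = cascade \<eta> x - \<eta> x" for x
  have DL: "in_L2 D" unfolding D_def by (rule L2_diff[OF L2_cascade[OF etaL] etaL])
  have zD: "zo Jset D" unfolding D_def by (rule zo_diff[OF zo_J[OF zeta] zeta])
  define c where "c = L2_norm_sq D"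
  have Ypow: "Y (k + N) = (cascade ^^ k) \<eta>" for k unfolding Y_def \<eta>_def by (simp add: funpow_add)
  have YpowS: "Y (Suc (k + N)) = (cascade ^^ k) (cascade \<eta>)" for k
  proof -
    have e: "Suc (k + N) = k + Suc N" by simp
    show ?thesis unfolding Y_def \<eta>_def e by (simp only: funpow_add funpow.simps(2) o_apply)
  qed
  have Dk: "L2_norm_sq ((cascade ^^ k) D) = c" for k
  proof (induction k)
    case 0 then show ?case by (simp add: c_def)
  next
    case (Suc k)
    have "L2_norm_sq ((cascade ^^ Suc k) D) = L2_norm_sq (cascade ((cascade ^^ k) D))" by simp
    also have "\<dots> = L2_norm_sq ((cascade ^^ k) D)"
      by (rule cascade_iso[OF L2_pow[OF DL] zo_J_pow[OF zD]])
    finally show ?case using Suc by simp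
  qed
  have seq_eq: "L2_norm_sq ((cascade ^^ Suc n) \<xi> - (cascade ^^ n) \<xi>) = L2_norm_sq (\<lambda>x. Y (Suc n) x - Y n x)" for n
  proof -
    have "(cascade ^^ Suc n) \<xi> - (cascade ^^ n) \<xi> = (\<lambda>x. X (Suc n) x - X n x)"
      unfolding X_def by (simp add: fun_diff_def)
    moreover have "L2_norm_sq (\<lambda>x. X (Suc n) x - X n x) = L2_norm_sq (\<lambda>x. Y (Suc n) x - Y n x)"
    proof (rule L2_norm_AE)
      show "in_L2 (\<lambda>x. X (Suc n) x - X n x)" by (rule L2_diff[OF XL XL])
      show "in_L2 (\<lambda>x. Y (Suc n) x - Y n x)" by (rule L2_diff[OF YL YL])
      show "AE x in \<mu>. X (Suc n) x - X n x = Y (Suc n) x - Y n x"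
        using XY[of n] XY[of "Suc n"] by eventually_elim simp
    qed
    ultimately show ?thesis by simp
  qed
  have ev: "\<forall>\<^sub>F n in sequentially. L2_norm_sq ((cascade ^^ Suc n) \<xi> - (cascade ^^ n) \<xi>) = c"
    unfolding eventually_sequentially
  proof (intro exI allI impI)
    fix n assume "N \<le> n"
    then obtain k where k: "n = k + N" by (metis add.commute le_add_diff_inverse)
    have "(\<lambda>x. Y (Suc n) x - Y n x) = (cascade ^^ k) D"
      unfolding k YpowS Ypow D_def by (simp add: cascade_pow_diff)
    then show "L2_norm_sq ((cascade ^^ Suc n) \<xi> - (cascade ^^ n) \<xi>) = c"
      using seq_eq[of n] Dk[of k] by simp
  qed
  then have lim: "(\<lambda>n. L2_norm_sq ((cascade ^^ Suc n) \<xi> - (cascade ^^ n) \<xi>)) \<longlonglongrightarrow> c"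
    by (rule tendsto_eventually)
  have cpos: "c > 0"
  proof (rule ccontr)
    assume "\<not> c > 0"
    then have c0: "c = 0" using L2_norm_nonneg[of D] unfolding c_def by simp
    have "AE x in \<mu>. (cmod (D x))\<^sup>2 = 0"
      using c0 unfolding c_def L2_norm_sq_def
      by (subst integral_nonneg_eq_0_iff_AE[symmetric]) (use L2_int[OF DL] in auto)
    then have "AE x in \<mu>. cascade \<eta> x = \<eta> x" by eventually_elim (simp add: D_def)
    then obtain a where a: "AE x in \<mu>. \<eta> x = a * indicator cantor_set x"
      using fixed_point[OF etaL zeta] by blast
    define \<delta> where "\<delta> x = \<xi>0 x - a * indicator cantor_set x" for x
    have zd: "zo {-B0..B0} \<delta>"
      unfolding zo_def
    proof (intro allI impI)
      fix x assume x: "x \<notin> {-B0..B0}"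
      then have "x \<notin> cantor_set" using cantor_01[of x] B01 by auto
      then show "\<delta> x = 0" using x unfolding \<delta>_def \<xi>0_def by simp
    qed
    have "(cascade ^^ N) \<delta> = (\<lambda>x. \<eta> x - a * indicator cantor_set x)"
      unfolding \<delta>_def cascade_pow_diff cascade_pow_indC \<eta>_def Y_def ..
    then have "AE x in \<mu>. (cascade ^^ N) \<delta> x = 0" using a by simp
    then have "AE x in \<mu>. \<delta> x = 0" by (rule cascade_pow_inj[OF zd])
    then have "AE x in \<mu>. \<xi> x = a * indicator cantor_set x"
      using ae0 by eventually_elim (simp add: \<delta>_def)
    then show False using assms(3) by blast
  qed
  have nconv: "\<not> (\<exists>\<eta>. in_L2 \<eta> \<and> (\<lambda>n. L2_norm_sq ((cascade ^^ n) \<xi> - \<eta>)) \<longlonglongrightarrow> 0)"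
  proof
    assume "\<exists>\<eta>. in_L2 \<eta> \<and> (\<lambda>n. L2_norm_sq ((cascade ^^ n) \<xi> - \<eta>)) \<longlonglongrightarrow> 0"
    then obtain h where h: "in_L2 h" "(\<lambda>n. L2_norm_sq ((cascade ^^ n) \<xi> - h)) \<longlonglongrightarrow> 0" by blast
    have h': "(\<lambda>n. L2_norm_sq (\<lambda>x. X n x - h x)) \<longlonglongrightarrow> 0"
      using h(2) unfolding X_def by (simp add: fun_diff_def)
    have u: "(\<lambda>n. 2 * L2_norm_sq (\<lambda>x. X (Suc n) x - h x) + 2 * L2_norm_sq (\<lambda>x. X n x - h x)) \<longlonglongrightarrow> 2*0 + 2*0"
      by (intro tendsto_intros h' LIMSEQ_Suc[OF h'])
    have le: "L2_norm_sq ((cascade ^^ Suc n) \<xi> - (cascade ^^ n) \<xi>) \<le>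
        2 * L2_norm_sq (\<lambda>x. X (Suc n) x - h x) + 2 * L2_norm_sq (\<lambda>x. X n x - h x)" for n
    proof -
      have "(cascade ^^ Suc n) \<xi> - (cascade ^^ n) \<xi> = (\<lambda>x. X (Suc n) x - X n x)"
        unfolding X_def by (simp add: fun_diff_def)
      then show ?thesis using L2_tri[OF XL XL h(1)] by simp
    qed
    have "c \<le> 2*0 + 2*0"
      by (rule tendsto_le[OF trivial_limit_sequentially u lim]) (use le in auto)
    then show False using cpos by simp
  qed
  show ?thesis using cpos lim nconv by blast
qed


end
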